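(* Let $\mathcal{X}$ be a measurable space, let $k:\mathcal{X}\times\mathcal{X}\to\mathbb{R}$ be a measurable reproducing kernel with $|k(x,y)|\le 1$ for all $x,y\in\mathcal{X}$, and let $\{\mathbb{P}_\theta:\theta\in\Theta\}$ be a family of Borel probability measures on $\mathcal{X}$. Let $\mathbb{P}^*_0$ be a Borel probability measure on $\mathcal{X}$, let $n\ge 1$, and let $x_1,\dots,x_n$ be i.i.d. with law $\mathbb{P}^*_0$. Fix $\alpha>0$, an integer $T\ge 1$ and a Borel probability measure $\mathbb{F}$ on $\mathcal{X}$, and let $\nu_n$ be the approximate posterior defined in the context. Then \[ \mathbb{E}_{x_{1:n}\overset{\text{iid}}{\sim}\mathbb{P}^*_0}\Big[\mathbb{E}_{\mathbb{P}\sim\nu_n}\big[\mathrm{MMD}(\mathbb{P}^*_0,\mathbb{P}_{\theta^*(\mathbb{P})})\big]\Big] \le \inf_{\theta\in\Theta}\mathrm{MMD}(\mathbb{P}^*_0,\mathbb{P}_\theta)+\frac{2}{\sqrt{n}}+2\sqrt{\frac{2(n-1)+\alpha(\alpha+1)}{(\alpha+n)(n+\alpha+1)}}+2\sqrt{\frac{\alpha(1+\alpha)}{(\alpha+n)(\alpha+n+1)}}. \]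
   Context: For a Borel probability measure $\mathbb{P}$ on $\mathcal{X}$, its kernel mean embedding is $\mu_{\mathbb{P}}=\int k(x,\cdot)\,\mathbb{P}(dx)$, an element of the reproducing kernel Hilbert space $\mathcal{H}_k$ of $k$, and the maximum mean discrepancy is $\mathrm{MMD}(\mathbb{P},\mathbb{Q})=\|\mu_{\mathbb{P}}-\mu_{\mathbb{Q}}\|_{\mathcal{H}_k}$. For a probability measure $\mathbb{P}$, $\theta^*(\mathbb{P})$ denotes a minimiser $\theta^*(\mathbb{P})\in\arg\inf_{\theta\in\Theta}\mathrm{MMD}^2(\mathbb{P},\mathbb{P}_\theta)$ (assumed to exist and to be chosen measurably). Given data $x_{1:n}$, the approximate posterior $\nu_n$ is the law of the random probability measure $\mathbb{P}=\sum_{i=1}^n w_i\delta_{x_i}+\sum_{k=1}^T\tilde w_k\delta_{\tilde x_k}$, where $\tilde x_1,\dots,\tilde x_T$ are i.i.d. with law $\mathbb{F}$, independent of the weights $(w_1,\dots,w_n,\tilde w_1,\dots,\tilde w_T)\sim\mathrm{Dirichlet}(1,\dots,1,\tfrac{\alpha}{T},\dots,\tfrac{\alpha}{T})$ ($n$ parameters equal to $1$ and $T$ equal to $\alpha/T$). *)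

theory Defs
  imports "HOL-Probability.Probability"
begin

text \<open>Positive definite (reproducing) kernel: symmetric, and every Gram matrix is
  positive semidefinite. By Moore-Aronszajn these are exactly the reproducing kernels.\<close>
definition pd_kernel :: "'a set \<Rightarrow> ('a \<Rightarrow> 'a \<Rightarrow> real) \<Rightarrow> bool" where
  "pd_kernel X k \<longleftrightarrow> (\<forall>x\<in>X. \<forall>y\<in>X. k x y = k y x) \<and>
     (\<forall>(N::nat) (z::nat \<Rightarrow> 'a) (c::nat \<Rightarrow> real). (\<forall>i<N. z i \<in> X) \<longrightarrow>
        (\<Sum>i<N. \<Sum>j<N. c i * c j * k (z i) (z j)) \<ge> 0)"

text \<open>Squared MMD: the squared RKHS norm of the difference of kernel mean embeddings,
  written out via the reproducing property
  (||mu_P - mu_Q||^2 = <mu_P,mu_P> - 2<mu_P,mu_Q> + <mu_Q,mu_Q>).\<close>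
definition mmd2 :: "('a \<Rightarrow> 'a \<Rightarrow> real) \<Rightarrow> 'a measure \<Rightarrow> 'a measure \<Rightarrow> real" where
  "mmd2 k P Q =
     (\<integral>x. (\<integral>y. k x y \<partial>P) \<partial>P) - 2 * (\<integral>x. (\<integral>y. k x y \<partial>Q) \<partial>P)
     + (\<integral>x. (\<integral>y. k x y \<partial>Q) \<partial>Q)"

definition mmd :: "('a \<Rightarrow> 'a \<Rightarrow> real) \<Rightarrow> 'a measure \<Rightarrow> 'a measure \<Rightarrow> real" where
  "mmd k P Q = sqrt (mmd2 k P Q)"

definition gamma_measure :: "real \<Rightarrow> real measure" where
  "gamma_measure a = density lborel
     (\<lambda>x. ennreal (if x > 0 then x powr (a - 1) * exp (- x) / Gamma a else 0))"

definition dirichlet :: "nat \<Rightarrow> (nat \<Rightarrow> real) \<Rightarrow> (nat \<Rightarrow> real) measure" where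
  "dirichlet N a = distr (PiM {..<N} (\<lambda>i. gamma_measure (a i))) (PiM {..<N} (\<lambda>_. borel))
     (\<lambda>g. restrict (\<lambda>i. g i / (\<Sum>j<N. g j)) {..<N})"

definition wpm :: "'a measure \<Rightarrow> nat \<Rightarrow> (nat \<Rightarrow> 'a) \<Rightarrow> (nat \<Rightarrow> real) \<Rightarrow> 'a measure" where
  "wpm M N z w = measure_of (space M) (sets M)
     (\<lambda>A. \<Sum>i<N. ennreal (w i) * indicator A (z i))"

text \<open>Atoms of the posterior draw: data points x_1..x_n followed by x~_1..x~_T.\<close>
definition atoms :: "nat \<Rightarrow> (nat \<Rightarrow> 'a) \<Rightarrow> (nat \<Rightarrow> 'a) \<Rightarrow> nat \<Rightarrow> 'a" where
  "atoms n xs xt = (\<lambda>i. if i < n then xs i else xt (i - n))"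

definition dir_params :: "nat \<Rightarrow> nat \<Rightarrow> real \<Rightarrow> nat \<Rightarrow> real" where
  "dir_params n T \<alpha> = (\<lambda>i. if i < n then 1 else \<alpha> / real T)"

text \<open>Joint law of (weights, auxiliary atoms) under the approximate posterior.\<close>
definition post_law :: "nat \<Rightarrow> nat \<Rightarrow> real \<Rightarrow> 'a measure
    \<Rightarrow> ((nat \<Rightarrow> real) \<times> (nat \<Rightarrow> 'a)) measure" where
  "post_law n T \<alpha> F = dirichlet (n + T) (dir_params n T \<alpha>) \<Otimes>\<^sub>M PiM {..<T} (\<lambda>_. F)"

end

theory Submission
  imports Defs
begin

definition kint :: "('a \<Rightarrow> 'a \<Rightarrow> real) \<Rightarrow> 'a measure \<Rightarrow> 'a measure \<Rightarrow> real" where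
  "kint k P Q = (\<integral>x. (\<integral>y. k x y \<partial>Q) \<partial>P)"

lemma mmd2_kint: "mmd2 k P Q = kint k P P - 2 * kint k P Q + kint k Q Q"
  by (simp add: mmd2_def kint_def)

locale kern =
  fixes M :: "'a measure" and k :: "'a \<Rightarrow> 'a \<Rightarrow> real"
  assumes k_meas: "(\<lambda>(x, y). k x y) \<in> borel_measurable (M \<Otimes>\<^sub>M M)"
    and k_pd: "pd_kernel (space M) k"
    and k_bdd: "\<And>x y. x \<in> space M \<Longrightarrow> y \<in> space M \<Longrightarrow> \<bar>k x y\<bar> \<le> 1"
begin

lemma k_sym: "x \<in> space M \<Longrightarrow> y \<in> space M \<Longrightarrow> k x y = k y x"
  using k_pd by (auto simp: pd_kernel_def)

lemma k_psd_pts: fixes N :: nat and c :: "nat \<Rightarrow> real" and z :: "nat \<Rightarrow> 'a" assumes "\<And>i. i < N \<Longrightarrow> z i \<in> space M" shows "0 \<le> (\<Sum>i<N. \<Sum>j<N. c i * c j * k (z i) (z j))"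
  using k_pd assms unfolding pd_kernel_def by blast

lemma k_meas_pair: "sets A = sets M \<Longrightarrow> sets B = sets M \<Longrightarrow> (\<lambda>(x,y). k x y) \<in> borel_measurable (A \<Otimes>\<^sub>M B)"
  using k_meas by (subst measurable_cong_sets[OF sets_pair_measure_cong refl]) auto

lemma k_meas_comp:
  assumes "f \<in> measurable N M" "g \<in> measurable N M"
  shows "(\<lambda>x. k (f x) (g x)) \<in> borel_measurable N"
proof -
  have "(\<lambda>x. (f x, g x)) \<in> measurable N (M \<Otimes>\<^sub>M M)" using assms by (rule measurable_Pair)
  from measurable_comp[OF this k_meas] show ?thesis by (simp add: comp_def)
qed

lemma inner_meas:
  assumes "prob_space Q" "sets Q = sets M"
  shows "(\<lambda>x. \<integral>y. k x y \<partial>Q) \<in> borel_measurable M"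
proof -
  interpret Q: prob_space Q by fact
  show ?thesis
    by (rule Q.borel_measurable_lebesgue_integral) (use k_meas_pair[OF refl assms(2)] in simp)
qed

lemma inner_bdd:
  assumes "prob_space Q" "sets Q = sets M" "x \<in> space M"
  shows "\<bar>\<integral>y. k x y \<partial>Q\<bar> \<le> 1"
proof -
  interpret Q: prob_space Q by fact
  have sp: "space Q = space M" using assms(2) by (rule sets_eq_imp_space_eq)
  have m: "(\<lambda>y. k x y) \<in> borel_measurable Q"
    using k_meas_comp[of "\<lambda>_. x" Q "\<lambda>y. y"] assms(3) measurable_cong_sets[OF assms(2) refl]
    by (simp add: measurable_ident_sets[OF assms(2)])
  have b: "\<And>y. y \<in> space Q \<Longrightarrow> norm (k x y) \<le> 1" using k_bdd assms(3) sp by auto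
  have i: "integrable Q (\<lambda>y. k x y)" using m b by (intro Q.integrable_const_bound[of _ 1]) auto
  have "\<bar>\<integral>y. k x y \<partial>Q\<bar> \<le> (\<integral>y. norm (k x y) \<partial>Q)" using integral_norm_bound[of Q "\<lambda>y. k x y"] by simp
  also have "\<dots> \<le> (\<integral>y. 1 \<partial>Q)" using i b by (intro integral_mono) auto
  finally show ?thesis by (simp add: Q.prob_space)
qed


lemma kint_bdd:
  assumes "prob_space P" "sets P = sets M" "prob_space Q" "sets Q = sets M"
  shows "\<bar>kint k P Q\<bar> \<le> 1"
proof -
  interpret P: prob_space P by fact
  have sp: "space P = space M" using assms(2) by (rule sets_eq_imp_space_eq)
  have m: "(\<lambda>x. \<integral>y. k x y \<partial>Q) \<in> borel_measurable P"
    using inner_meas[OF assms(3,4)] by (subst measurable_cong_sets[OF assms(2) refl])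
  have b: "\<And>x. x \<in> space P \<Longrightarrow> norm (\<integral>y. k x y \<partial>Q) \<le> 1" using inner_bdd[OF assms(3,4)] sp by auto
  have i: "integrable P (\<lambda>x. \<integral>y. k x y \<partial>Q)" using m b by (intro P.integrable_const_bound[of _ 1]) auto
  have "\<bar>kint k P Q\<bar> \<le> (\<integral>x. norm (\<integral>y. k x y \<partial>Q) \<partial>P)" unfolding kint_def
    using integral_norm_bound[of P "\<lambda>x. \<integral>y. k x y \<partial>Q"] by simp
  also have "\<dots> \<le> (\<integral>y. 1 \<partial>P)" using i b by (intro integral_mono) auto
  finally show ?thesis by (simp add: P.prob_space)
qed

lemma kint_sym:
  assumes "prob_space P" "sets P = sets M" "prob_space Q" "sets Q = sets M"
  shows "kint k P Q = kint k Q P"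
proof -
  interpret P: prob_space P by fact
  interpret Q: prob_space Q by fact
  interpret PQ: pair_sigma_finite P Q ..
  interpret PQp: prob_space "P \<Otimes>\<^sub>M Q" by (rule prob_space_pair) unfold_locales
  have spP: "space P = space M" using assms(2) by (rule sets_eq_imp_space_eq)
  have spQ: "space Q = space M" using assms(4) by (rule sets_eq_imp_space_eq)
  have int: "integrable (P \<Otimes>\<^sub>M Q) (\<lambda>(x, y). k x y)"
    apply (rule PQp.integrable_const_bound[of _ 1])
    using k_bdd spP spQ apply (auto simp: space_pair_measure)[1]
    using k_meas_pair[OF assms(2,4)] by simp
  have "kint k P Q = (\<integral>y. (\<integral>x. k x y \<partial>P) \<partial>Q)"
    unfolding kint_def using PQ.Fubini_integral[OF int] by simp
  also have "\<dots> = (\<integral>y. (\<integral>x. k y x \<partial>P) \<partial>Q)"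
  proof (rule Bochner_Integration.integral_cong[OF refl])
    fix y assume y: "y \<in> space Q"
    show "(\<integral>x. k x y \<partial>P) = (\<integral>x. k y x \<partial>P)"
    proof (rule Bochner_Integration.integral_cong[OF refl])
      fix x assume "x \<in> space P" then show "k x y = k y x" using k_sym y spP spQ by auto
    qed
  qed
  finally show ?thesis by (simp add: kint_def)
qed

end

lemma pair_marginal_distr:
  assumes prob: "\<And>i. i \<in> I \<Longrightarrow> prob_space (Mi i)" and ij: "i \<in> I" "j \<in> I" "i \<noteq> j"
  shows "distr (PiM I Mi) (Mi i \<Otimes>\<^sub>M Mi j) (\<lambda>\<omega>. (\<omega> i, \<omega> j)) = Mi i \<Otimes>\<^sub>M Mi j"
proof (rule pair_measure_eqI[symmetric])
  show "sigma_finite_measure (Mi i)" "sigma_finite_measure (Mi j)"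
    using prob ij by (auto intro: prob_space_imp_sigma_finite)
  show "sets (Mi i \<Otimes>\<^sub>M Mi j) = sets (distr (Pi\<^sub>M I Mi) (Mi i \<Otimes>\<^sub>M Mi j) (\<lambda>\<omega>. (\<omega> i, \<omega> j)))" by simp
  fix A B assume A: "A \<in> sets (Mi i)" and B: "B \<in> sets (Mi j)"
  define F where "F = (\<lambda>l. if l = i then A else B)"
  have F: "\<And>l. l \<in> {i, j} \<Longrightarrow> F l \<in> sets (Mi l)" using A B ij by (auto simp: F_def)
  have meas: "(\<lambda>\<omega>. (\<omega> i, \<omega> j)) \<in> measurable (PiM I Mi) (Mi i \<Otimes>\<^sub>M Mi j)"
    using ij by (intro measurable_Pair measurable_component_singleton) auto
  have pre: "(\<lambda>\<omega>. (\<omega> i, \<omega> j)) -` (A \<times> B) \<inter> space (PiM I Mi) = prod_emb I Mi {i, j} (Pi\<^sub>E {i, j} F)"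
    using ij by (auto simp: prod_emb_def space_PiM F_def PiE_iff)
  have "emeasure (distr (PiM I Mi) (Mi i \<Otimes>\<^sub>M Mi j) (\<lambda>\<omega>. (\<omega> i, \<omega> j))) (A \<times> B)
      = emeasure (PiM I Mi) (prod_emb I Mi {i, j} (Pi\<^sub>E {i, j} F))"
    using A B meas by (subst emeasure_distr) (auto simp: pre)
  also have "\<dots> = (\<Prod>l\<in>{i,j}. emeasure (Mi l) (F l))"
    using ij F prob by (intro emeasure_PiM_emb) auto
  also have "\<dots> = emeasure (Mi i) A * emeasure (Mi j) B"
    using ij by (simp add: F_def)
  finally show "emeasure (Mi i) A * emeasure (Mi j) B = emeasure (distr (PiM I Mi) (Mi i \<Otimes>\<^sub>M Mi j) (\<lambda>\<omega>. (\<omega> i, \<omega> j))) (A \<times> B)" by simp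
qed

lemma pair_marginal_integral:
  fixes f :: "'a \<Rightarrow> 'a \<Rightarrow> real"
  assumes prob: "\<And>i. i \<in> I \<Longrightarrow> prob_space (Mi i)" and ij: "i \<in> I" "j \<in> I" "i \<noteq> j"
    and fm: "(\<lambda>(x, y). f x y) \<in> borel_measurable (Mi i \<Otimes>\<^sub>M Mi j)"
    and fb: "\<And>x y. x \<in> space (Mi i) \<Longrightarrow> y \<in> space (Mi j) \<Longrightarrow> \<bar>f x y\<bar> \<le> B"
  shows "(\<integral>\<omega>. f (\<omega> i) (\<omega> j) \<partial>PiM I Mi) = (\<integral>x. (\<integral>y. f x y \<partial>Mi j) \<partial>Mi i)"
proof -
  interpret A: prob_space "Mi i" using prob ij by auto
  interpret B: prob_space "Mi j" using prob ij by auto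
  interpret AB: pair_sigma_finite "Mi i" "Mi j" ..
  interpret ABp: prob_space "Mi i \<Otimes>\<^sub>M Mi j" by (rule prob_space_pair) unfold_locales
  have meas: "(\<lambda>\<omega>. (\<omega> i, \<omega> j)) \<in> measurable (PiM I Mi) (Mi i \<Otimes>\<^sub>M Mi j)"
    using ij by (intro measurable_Pair measurable_component_singleton) auto
  have "(\<integral>\<omega>. f (\<omega> i) (\<omega> j) \<partial>PiM I Mi) = (\<integral>\<omega>. (\<lambda>(x, y). f x y) ((\<lambda>\<omega>. (\<omega> i, \<omega> j)) \<omega>) \<partial>PiM I Mi)"
    by simp
  also have "\<dots> = (\<integral>p. (\<lambda>(x, y). f x y) p \<partial>distr (PiM I Mi) (Mi i \<Otimes>\<^sub>M Mi j) (\<lambda>\<omega>. (\<omega> i, \<omega> j)))"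
    using meas fm by (subst integral_distr) auto
  also have "\<dots> = (\<integral>p. (\<lambda>(x, y). f x y) p \<partial>(Mi i \<Otimes>\<^sub>M Mi j))"
    by (subst pair_marginal_distr[OF prob ij]) auto
  also have "\<dots> = (\<integral>x. (\<integral>y. f x y \<partial>Mi j) \<partial>Mi i)"
  proof (rule AB.integral_fst[symmetric])
    show "integrable (Mi i \<Otimes>\<^sub>M Mi j) (\<lambda>(x, y). f x y)"
      apply (rule ABp.integrable_const_bound[of _ B])
      using fb apply (auto simp: space_pair_measure)[1]
      using fm by simp
  qed
  finally show ?thesis .
qed

lemma single_marginal_integral:
  fixes f :: "'a \<Rightarrow> real"
  assumes prob: "\<And>i. i \<in> I \<Longrightarrow> prob_space (Mi i)" and i: "i \<in> I"
    and fm: "f \<in> borel_measurable (Mi i)"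
  shows "(\<integral>\<omega>. f (\<omega> i) \<partial>PiM I Mi) = (\<integral>x. f x \<partial>Mi i)"
proof -
  have meas: "(\<lambda>\<omega>. \<omega> i) \<in> measurable (PiM I Mi) (Mi i)"
    using i by (intro measurable_component_singleton) auto
  have "(\<integral>\<omega>. f (\<omega> i) \<partial>PiM I Mi) = (\<integral>x. f x \<partial>distr (PiM I Mi) (Mi i) (\<lambda>\<omega>. \<omega> i))"
    using meas fm by (subst integral_distr) auto
  also have "\<dots> = (\<integral>x. f x \<partial>Mi i)" by (subst distr_PiM_component[OF prob i]) auto
  finally show ?thesis .
qed

lemma sum_mod_rep:
  fixes f :: "nat \<Rightarrow> real"
  shows "(\<Sum>i<N*m. f (i mod m)) = real N * (\<Sum>a<m. f a)"
proof (induction N)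
  case (Suc N)
  have split: "(\<Sum>i<N*m + m. f (i mod m)) = (\<Sum>i<N*m. f (i mod m)) + (\<Sum>a<m. f ((N*m + a) mod m))"
  proof -
    have "\<And>q. (\<Sum>i<N*m + q. f (i mod m)) = (\<Sum>i<N*m. f (i mod m)) + (\<Sum>a<q. f ((N*m + a) mod m))"
    proof -
      fix q show "(\<Sum>i<N*m + q. f (i mod m)) = (\<Sum>i<N*m. f (i mod m)) + (\<Sum>a<q. f ((N*m + a) mod m))"
        by (induction q) auto
    qed
    then show ?thesis .
  qed
  have "(\<Sum>a<m. f ((N*m + a) mod m)) = (\<Sum>a<m. f a)"
    by (intro sum.cong) auto
  then show ?case using Suc split by (simp add: algebra_simps)
qed simp


context kern begin

lemma psd_N:
  fixes P :: "nat \<Rightarrow> 'a measure" and c :: "nat \<Rightarrow> real" and m N :: nat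
  assumes prob: "\<And>a. a < m \<Longrightarrow> prob_space (P a)" and sets: "\<And>a. a < m \<Longrightarrow> sets (P a) = sets M"
    and m: "m > 0"
  shows "0 \<le> real N * real N * (\<Sum>a<m. \<Sum>b<m. c a * c b * kint k (P a) (P b))
     + real N * (\<Sum>a<m. c a * c a * ((\<integral>x. k x x \<partial>P a) - kint k (P a) (P a)))"
proof -
  define Mi where "Mi = (\<lambda>i. P (i mod m))"
  define I where "I = {..<N*m}"
  define K where "K = (\<lambda>a b. kint k (P a) (P b))"
  define D where "D = (\<lambda>a. (\<integral>x. k x x \<partial>P a))"
  have probi: "\<And>i. prob_space (Mi i)" using prob m by (simp add: Mi_def)
  have setsi: "\<And>i. sets (Mi i) = sets M" using sets m by (simp add: Mi_def)
  have spi: "\<And>i. space (Mi i) = space M" using setsi by (rule sets_eq_imp_space_eq)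
  interpret PI: prob_space "PiM I Mi" using probi by (intro prob_space_PiM) auto
  have compm: "\<And>i. i \<in> I \<Longrightarrow> (\<lambda>\<omega>. \<omega> i) \<in> measurable (PiM I Mi) M"
    using setsi by (subst measurable_cong_sets[OF refl setsi[symmetric]]) (rule measurable_component_singleton)
  have kmeas: "\<And>i j. i \<in> I \<Longrightarrow> j \<in> I \<Longrightarrow> (\<lambda>\<omega>. k (\<omega> i) (\<omega> j)) \<in> borel_measurable (PiM I Mi)"
    using compm by (intro k_meas_comp) auto
  have spPI: "\<And>\<omega> i. \<omega> \<in> space (PiM I Mi) \<Longrightarrow> i \<in> I \<Longrightarrow> \<omega> i \<in> space M"
    using spi by (auto simp: space_PiM PiE_iff)
  have kint_ij: "\<And>i j. i \<in> I \<Longrightarrow> j \<in> I \<Longrightarrow> integrable (PiM I Mi) (\<lambda>\<omega>. c (i mod m) * c (j mod m) * k (\<omega> i) (\<omega> j))"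
    apply (intro integrable_mult_right)
    apply (rule PI.integrable_const_bound[of _ 1])
    using spPI k_bdd kmeas by auto
  have e1: "(\<integral>\<omega>. k (\<omega> i) (\<omega> j) \<partial>PiM I Mi) = K (i mod m) (j mod m) + (if i = j then D (i mod m) - K (i mod m) (i mod m) else 0)"
    if ij: "i \<in> I" "j \<in> I" for i j
  proof (cases "i = j")
    case True
    have "(\<lambda>x. k x x) \<in> borel_measurable (Mi i)"
      by (intro k_meas_comp) (auto simp: measurable_ident_sets[OF setsi])
    then have "(\<integral>\<omega>. k (\<omega> i) (\<omega> i) \<partial>PiM I Mi) = (\<integral>x. k x x \<partial>Mi i)"
      using probi ij by (intro single_marginal_integral) auto
    then show ?thesis using True by (simp add: D_def Mi_def)
  next
    case False
    have "(\<integral>\<omega>. k (\<omega> i) (\<omega> j) \<partial>PiM I Mi) = (\<integral>x. (\<integral>y. k x y \<partial>Mi j) \<partial>Mi i)"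
      using probi ij False k_meas_pair[OF setsi setsi] k_bdd spi
      by (intro pair_marginal_integral[where B=1]) auto
    then show ?thesis using False by (simp add: K_def Mi_def kint_def)
  qed
  have pos: "\<And>\<omega>. \<omega> \<in> space (PiM I Mi) \<Longrightarrow> 0 \<le> (\<Sum>i\<in>I. \<Sum>j\<in>I. c (i mod m) * c (j mod m) * k (\<omega> i) (\<omega> j))"
    unfolding I_def by (rule k_psd_pts) (use spPI I_def in auto)
  have "0 \<le> (\<integral>\<omega>. (\<Sum>i\<in>I. \<Sum>j\<in>I. c (i mod m) * c (j mod m) * k (\<omega> i) (\<omega> j)) \<partial>PiM I Mi)"
    using pos by (intro Bochner_Integration.integral_nonneg) auto
  also have "\<dots> = (\<Sum>i\<in>I. \<Sum>j\<in>I. c (i mod m) * c (j mod m) * (\<integral>\<omega>. k (\<omega> i) (\<omega> j) \<partial>PiM I Mi))"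
    apply (subst Bochner_Integration.integral_sum)
    using kint_ij apply (auto intro!: Bochner_Integration.integrable_sum)[1]
    apply (rule sum.cong[OF refl])
    apply (subst Bochner_Integration.integral_sum)
    using kint_ij apply auto[1]
    apply (rule sum.cong[OF refl])
    by simp
  also have "\<dots> = (\<Sum>i\<in>I. \<Sum>j\<in>I. c (i mod m) * c (j mod m) * K (i mod m) (j mod m))
      + (\<Sum>i\<in>I. \<Sum>j\<in>I. (if i = j then c (i mod m) * c (i mod m) * (D (i mod m) - K (i mod m) (i mod m)) else 0))"
  proof -
    have "\<And>i j. i \<in> I \<Longrightarrow> j \<in> I \<Longrightarrow> c (i mod m) * c (j mod m) * (\<integral>\<omega>. k (\<omega> i) (\<omega> j) \<partial>PiM I Mi)
       = c (i mod m) * c (j mod m) * K (i mod m) (j mod m) + (if i = j then c (i mod m) * c (i mod m) * (D (i mod m) - K (i mod m) (i mod m)) else 0)"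
      by (auto simp: e1 algebra_simps)
    then show ?thesis by (simp add: sum.distrib)
  qed
  also have "(\<Sum>i\<in>I. \<Sum>j\<in>I. (if i = j then c (i mod m) * c (i mod m) * (D (i mod m) - K (i mod m) (i mod m)) else 0))
     = (\<Sum>i\<in>I. c (i mod m) * c (i mod m) * (D (i mod m) - K (i mod m) (i mod m)))"
    by (simp add: I_def)
  also have "\<dots> = real N * (\<Sum>a<m. c a * c a * (D a - K a a))"
    unfolding I_def by (rule sum_mod_rep[where N=N and m=m and f="\<lambda>a. c a * c a * (D a - K a a)"])
  also have "(\<Sum>i\<in>I. \<Sum>j\<in>I. c (i mod m) * c (j mod m) * K (i mod m) (j mod m))
     = (\<Sum>i\<in>I. real N * (\<Sum>b<m. c (i mod m) * c b * K (i mod m) b))"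
    unfolding I_def by (rule sum.cong[OF refl]) (rule sum_mod_rep[where N=N and m=m and f="\<lambda>b. c (_ mod m) * c b * K (_ mod m) b"])
  also have "\<dots> = real N * (real N * (\<Sum>a<m. \<Sum>b<m. c a * c b * K a b))"
    unfolding I_def using sum_mod_rep[where N=N and m=m and f="\<lambda>a. real N * (\<Sum>b<m. c a * c b * K a b)"]
    by (simp add: sum_distrib_left)
  finally show ?thesis by (simp add: K_def D_def algebra_simps)
qed

lemma kint_psd:
  fixes P :: "nat \<Rightarrow> 'a measure" and c :: "nat \<Rightarrow> real" and m :: nat
  assumes prob: "\<And>a. a < m \<Longrightarrow> prob_space (P a)" and sets: "\<And>a. a < m \<Longrightarrow> sets (P a) = sets M"
  shows "0 \<le> (\<Sum>a<m. \<Sum>b<m. c a * c b * kint k (P a) (P b))"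
proof (cases "m = 0")
  case False
  define QQ where "QQ = (\<Sum>a<m. \<Sum>b<m. c a * c b * kint k (P a) (P b))"
  define R where "R = (\<Sum>a<m. c a * c a * ((\<integral>x. k x x \<partial>P a) - kint k (P a) (P a)))"
  have h: "\<And>N. 0 \<le> real N * real N * QQ + real N * R"
    unfolding QQ_def R_def using psd_N[OF prob sets] False by auto
  show ?thesis
  proof (rule ccontr)
    assume "\<not> ?thesis"
    then have q: "QQ < 0" by (simp add: QQ_def)
    obtain N :: nat where N: "N > R / (- QQ)" "N \<ge> 1"
      using reals_Archimedean2[of "max 1 (R / (- QQ))"] by (metis less_max_iff_disj nat_less_real_le of_nat_1 of_nat_le_iff order.strict_implies_order order_less_le_trans not_le)
    have "0 \<le> real N * (real N * QQ + R)" using h[of N] by (simp add: algebra_simps)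
    then have "0 \<le> real N * QQ + R" using N by (simp add: zero_le_mult_iff)
    moreover have "R < real N * (- QQ)" using N q by (simp add: field_simps)
    ultimately show False by simp
  qed
qed simp

end


definition wD :: "'a measure \<Rightarrow> nat \<Rightarrow> (nat \<Rightarrow> 'a) \<Rightarrow> (nat \<Rightarrow> real) \<Rightarrow> 'a measure" where
  "wD M N z w = distr (density (count_space {..<N}) (\<lambda>i. ennreal (w i))) M z"

lemma wD_z_meas:
  assumes "\<forall>i<N. z i \<in> space M"
  shows "z \<in> measurable (density (count_space {..<N}) (\<lambda>i. ennreal (w i))) M"
  using assms by (subst measurable_cong_sets[OF sets_density refl]) (auto simp: measurable_count_space_eq1)

lemma wpm_wD:
  assumes z: "\<forall>i<N. z i \<in> space M"
  shows "wpm M N z w = wD M N z w"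
proof -
  have zm: "z \<in> measurable (density (count_space {..<N}) (\<lambda>i. ennreal (w i))) M" by (rule wD_z_meas[OF z])
  have "wD M N z w = measure_of (space (wD M N z w)) (sets (wD M N z w)) (emeasure (wD M N z w))"
    by (rule measure_of_of_measure[symmetric])
  also have "\<dots> = measure_of (space M) (sets M) (emeasure (wD M N z w))"
    by (simp add: wD_def)
  also have "\<dots> = measure_of (space M) (sets M) (\<lambda>A. \<Sum>i<N. ennreal (w i) * indicator A (z i))"
  proof (rule measure_of_eq)
    show "sets M \<subseteq> Pow (space M)" by (rule sets.space_closed)
    fix A assume "A \<in> sigma_sets (space M) (sets M)"
    then have A: "A \<in> sets M" by (simp add: sets.sigma_sets_eq)
    have "emeasure (wD M N z w) A = emeasure (density (count_space {..<N}) (\<lambda>i. ennreal (w i))) (z -` A \<inter> {..<N})"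
      unfolding wD_def using zm A by (subst emeasure_distr) auto
    also have "\<dots> = (\<integral>\<^sup>+i. ennreal (w i) * indicator (z -` A \<inter> {..<N}) i \<partial>count_space {..<N})"
      by (subst emeasure_density) auto
    also have "\<dots> = (\<Sum>i<N. ennreal (w i) * indicator A (z i))"
      by (subst nn_integral_count_space_finite) (auto intro!: sum.cong simp: indicator_def)
    finally show "emeasure (wD M N z w) A = (\<Sum>i<N. ennreal (w i) * indicator A (z i))" .
  qed
  finally show ?thesis by (simp add: wpm_def)
qed

lemma sets_wpm:
  assumes z: "\<forall>i<N. z i \<in> space M"
  shows "sets (wpm M N z w) = sets M"
  by (simp add: wpm_wD[OF z] wD_def)

lemma space_wpm:
  assumes z: "\<forall>i<N. z i \<in> space M"
  shows "space (wpm M N z w) = space M"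
  by (simp add: wpm_wD[OF z] wD_def)

lemma integral_wpm:
  fixes f :: "'a \<Rightarrow> real"
  assumes z: "\<forall>i<N. z i \<in> space M" and w: "\<forall>i<N. 0 \<le> w i"
    and f: "f \<in> borel_measurable M"
  shows "(\<integral>x. f x \<partial>wpm M N z w) = (\<Sum>i<N. w i * f (z i))"
proof -
  have zm: "z \<in> measurable (density (count_space {..<N}) (\<lambda>i. ennreal (w i))) M" by (rule wD_z_meas[OF z])
  have "(\<integral>x. f x \<partial>wpm M N z w) = (\<integral>i. f (z i) \<partial>density (count_space {..<N}) (\<lambda>i. ennreal (w i)))"
    unfolding wpm_wD[OF z] wD_def using zm f by (subst integral_distr) auto
  also have "\<dots> = (\<integral>i. w i *\<^sub>R f (z i) \<partial>count_space {..<N})"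
    using w by (subst integral_density) (auto simp: AE_count_space)
  also have "\<dots> = (\<Sum>i<N. w i * f (z i))"
    by (simp add: lebesgue_integral_count_space_finite)
  finally show ?thesis .
qed

lemma prob_wpm:
  assumes z: "\<forall>i<N. z i \<in> space M" and w: "\<forall>i<N. 0 \<le> w i"
    and s: "(\<Sum>i<N. w i) = 1"
  shows "prob_space (wpm M N z w)"
proof
  have zm: "z \<in> measurable (density (count_space {..<N}) (\<lambda>i. ennreal (w i))) M" by (rule wD_z_meas[OF z])
  have "emeasure (wpm M N z w) (space M) = emeasure (density (count_space {..<N}) (\<lambda>i. ennreal (w i))) (z -` space M \<inter> {..<N})"
    unfolding wpm_wD[OF z] wD_def using zm by (subst emeasure_distr) auto
  also have "\<dots> = (\<integral>\<^sup>+i. ennreal (w i) * indicator (z -` space M \<inter> {..<N}) i \<partial>count_space {..<N})"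
    by (subst emeasure_density) auto
  also have "\<dots> = (\<Sum>i<N. ennreal (w i))"
    using z by (subst nn_integral_count_space_finite) (auto intro!: sum.cong simp: indicator_def)
  also have "\<dots> = ennreal (\<Sum>i<N. w i)" using w by (subst sum_ennreal) auto
  finally show "emeasure (wpm M N z w) (space (wpm M N z w)) = 1" using s by (simp add: space_wpm[OF z])
qed

context kern begin

lemma kint_wpm_left:
  assumes z: "\<forall>i<N. z i \<in> space M" and w: "\<forall>i<N. 0 \<le> w i"
    and Q: "prob_space Q" "sets Q = sets M"
  shows "kint k (wpm M N z w) Q = (\<Sum>i<N. w i * (\<integral>y. k (z i) y \<partial>Q))"
  unfolding kint_def by (rule integral_wpm[OF z w inner_meas[OF Q]])

lemma kint_wpm_wpm:
  assumes z: "\<forall>i<N. z i \<in> space M" and w: "\<forall>i<N. 0 \<le> w i"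
    and v: "\<forall>i<N. 0 \<le> v i"
  shows "kint k (wpm M N z w) (wpm M N z v) = (\<Sum>i<N. \<Sum>j<N. w i * v j * k (z i) (z j))"
proof -
  have "kint k (wpm M N z w) (wpm M N z v) = (\<Sum>i<N. w i * (\<integral>y. k (z i) y \<partial>wpm M N z v))"
    unfolding kint_def
  proof (rule integral_wpm[OF z w])
    show "(\<lambda>x. \<integral>y. k x y \<partial>wpm M N z v) \<in> borel_measurable M"
    proof -
      have eq: "\<And>x. x \<in> space M \<Longrightarrow> (\<integral>y. k x y \<partial>wpm M N z v) = (\<Sum>j<N. v j * k x (z j))"
        using z v by (intro integral_wpm) (auto intro!: k_meas_comp measurable_const measurable_ident)
      have "(\<lambda>x. \<Sum>j<N. v j * k x (z j)) \<in> borel_measurable M"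
        using z by (intro borel_measurable_sum borel_measurable_times measurable_const k_meas_comp) auto
      then show ?thesis by (subst measurable_cong[OF eq])
    qed
  qed
  also have "\<dots> = (\<Sum>i<N. w i * (\<Sum>j<N. v j * k (z i) (z j)))"
    using z v by (intro sum.cong refl arg_cong2[where f="(*)"] integral_wpm) (auto intro!: k_meas_comp measurable_const)
  finally show ?thesis by (simp add: sum_distrib_left mult.assoc)
qed

end


definition qf :: "nat \<Rightarrow> (nat \<Rightarrow> nat \<Rightarrow> real) \<Rightarrow> (nat \<Rightarrow> real) \<Rightarrow> real" where
  "qf m G c = (\<Sum>a<m. \<Sum>b<m. c a * c b * G a b)"

lemma disc_le:
  fixes a b c :: real
  assumes h: "\<And>t. 0 \<le> a + t * b + t^2 * c" and c: "c \<ge> 0"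
  shows "b^2 \<le> 4 * a * c"
proof (cases "c = 0")
  case True
  have "b = 0"
  proof (rule ccontr)
    assume b: "b \<noteq> 0"
    have "0 \<le> a + (-(a + 1) / b) * b + (-(a + 1) / b)^2 * c" by (rule h)
    then show False using b True by simp
  qed
  then show ?thesis using True by simp
next
  case False
  then have cp: "c > 0" using c by simp
  have "0 \<le> a + (- b / (2 * c)) * b + (- b / (2 * c))^2 * c" by (rule h)
  also have "\<dots> = a - b^2 / (4 * c)" using cp by (simp add: field_simps power2_eq_square)
  finally show ?thesis using cp by (simp add: field_simps)
qed

lemma qf_expand:
  "qf m G (\<lambda>a. u a + t * v a) = qf m G u + t * (\<Sum>a<m. \<Sum>b<m. (u a * v b + v a * u b) * G a b) + t^2 * qf m G v"
proof -
  have "\<And>a b. (u a + t * v a) * (u b + t * v b) * G a b = u a * u b * G a b + t * ((u a * v b + v a * u b) * G a b) + t^2 * (v a * v b * G a b)"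
    by (simp add: algebra_simps power2_eq_square)
  then show ?thesis unfolding qf_def by (simp add: sum.distrib sum_distrib_left)
qed

lemma qf_triangle:
  assumes psd: "\<And>c. 0 \<le> qf m G c"
  shows "sqrt (qf m G (\<lambda>a. u a + v a)) \<le> sqrt (qf m G u) + sqrt (qf m G v)"
proof -
  define B where "B = (\<Sum>a<m. \<Sum>b<m. (u a * v b + v a * u b) * G a b)"
  have exp: "\<And>t. qf m G (\<lambda>a. u a + t * v a) = qf m G u + t * B + t^2 * qf m G v"
    unfolding B_def by (rule qf_expand)
  have "B^2 \<le> 4 * qf m G u * qf m G v"
    by (rule disc_le) (use psd exp in \<open>metis\<close>, rule psd)
  then have "B \<le> 2 * sqrt (qf m G u) * sqrt (qf m G v)"
  proof -
    assume h: "B^2 \<le> 4 * qf m G u * qf m G v"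
    have "B \<le> sqrt (B^2)" by simp
    also have "\<dots> \<le> sqrt (4 * qf m G u * qf m G v)" using h by (rule real_sqrt_le_mono)
    also have "\<dots> = 2 * sqrt (qf m G u) * sqrt (qf m G v)"
      by (simp add: real_sqrt_mult)
    finally show ?thesis .
  qed
  moreover have "qf m G (\<lambda>a. u a + v a) = qf m G u + B + qf m G v" using exp[of 1] by simp
  ultimately have "qf m G (\<lambda>a. u a + v a) \<le> (sqrt (qf m G u) + sqrt (qf m G v))^2"
    using psd[of u] psd[of v] by (simp add: power2_eq_square algebra_simps)
  then have "sqrt (qf m G (\<lambda>a. u a + v a)) \<le> sqrt ((sqrt (qf m G u) + sqrt (qf m G v))^2)"
    by (rule real_sqrt_le_mono)
  also have "\<dots> = sqrt (qf m G u) + sqrt (qf m G v)" using psd[of u] psd[of v] by simp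
  finally show ?thesis .
qed

context kern begin

lemma mmd2_nonneg:
  assumes "prob_space A" "sets A = sets M" "prob_space B" "sets B = sets M"
  shows "0 \<le> mmd2 k A B"
proof -
  define P where "P = (\<lambda>a::nat. if a = 0 then A else B)"
  have "0 \<le> (\<Sum>a<2. \<Sum>b<2. (\<lambda>a. if a = 0 then 1 else -1) a * (\<lambda>a. if a = 0 then 1 else -1) b * kint k (P a) (P b))"
    using assms by (intro kint_psd) (auto simp: P_def)
  also have "\<dots> = mmd2 k A B"
    using kint_sym[OF assms] by (simp add: P_def eval_nat_numeral mmd2_kint)
  finally show ?thesis .
qed

lemma mmd_sym:
  assumes "prob_space A" "sets A = sets M" "prob_space B" "sets B = sets M"
  shows "mmd k A B = mmd k B A"
  using kint_sym[OF assms] by (simp add: mmd_def mmd2_kint)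

lemma mmd_triangle:
  assumes A: "prob_space A" "sets A = sets M" and B: "prob_space B" "sets B = sets M"
    and C: "prob_space C" "sets C = sets M"
  shows "mmd k A C \<le> mmd k A B + mmd k B C"
proof -
  define P where "P = (\<lambda>a::nat. if a = 0 then A else if a = 1 then B else C)"
  define G where "G = (\<lambda>a b. kint k (P a) (P b))"
  have psd: "\<And>c. 0 \<le> qf 3 G c"
    unfolding qf_def G_def using A B C by (intro kint_psd) (auto simp: P_def)
  define u where "u = (\<lambda>a::nat. if a = 0 then 1 else if a = 1 then -1 else (0::real))"
  define v where "v = (\<lambda>a::nat. if a = 0 then 0 else if a = 1 then 1 else (-1::real))"
  have s1: "kint k B A = kint k A B" "kint k C A = kint k A C" "kint k C B = kint k B C"
    using kint_sym A B C by auto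
  have "qf 3 G u = mmd2 k A B" "qf 3 G v = mmd2 k B C" "qf 3 G (\<lambda>a. u a + v a) = mmd2 k A C"
    by (simp_all add: qf_def G_def P_def u_def v_def eval_nat_numeral mmd2_kint s1)
  then show ?thesis using qf_triangle[OF psd, of u v] by (simp add: mmd_def)
qed

end

lemma GL:
  fixes p u :: real
  assumes p: "p > 0" and u: "u > 0"
  shows "(\<integral>\<^sup>+x. ennreal (indicator {0<..} x * x powr (p - 1) * exp (- (u * x))) \<partial>lborel) = ennreal (Gamma p / u powr p)"
proof -
  define F where "F = (\<lambda>t::real. ennreal (indicator {0<..} t * t powr (p - 1) * exp (- t)))"
  define I where "I = (\<integral>\<^sup>+x. ennreal (indicator {0<..} x * x powr (p - 1) * exp (- (u * x))) \<partial>lborel)"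
  have "ennreal (Gamma p) = (\<integral>\<^sup>+t. ennreal (indicator {0..} t * t powr (p - 1) / exp t) \<partial>lborel)"
    using Gamma_conv_nn_integral_real[OF p] by simp
  also have "\<dots> = integral\<^sup>N lborel F"
    unfolding F_def by (intro nn_integral_cong) (auto simp: indicator_def exp_minus field_simps)
  also have "\<dots> = ennreal u * (\<integral>\<^sup>+x. F (0 + u * x) \<partial>lborel)"
    using u by (subst nn_integral_real_affine[where c=u and t=0]) (auto simp: F_def)
  also have "(\<integral>\<^sup>+x. F (0 + u * x) \<partial>lborel) = (\<integral>\<^sup>+x. ennreal (u powr (p - 1)) * ennreal (indicator {0<..} x * x powr (p - 1) * exp (- (u * x))) \<partial>lborel)"
    unfolding F_def using u
    by (intro nn_integral_cong) (auto simp: indicator_def powr_mult ennreal_mult'[symmetric] zero_less_mult_iff mult_ac)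
  also have "\<dots> = ennreal (u powr (p - 1)) * I"
    unfolding I_def by (rule nn_integral_cmult) simp
  finally have eq0: "ennreal (Gamma p) = ennreal u * (ennreal (u powr (p - 1)) * I)" .
  have uu: "u * u powr (p - 1) = u powr p" using u by (simp add: powr_mult_base)
  have eq: "ennreal (Gamma p) = ennreal (u powr p) * I"
    unfolding eq0 using u by (simp add: mult.assoc[symmetric] ennreal_mult'[symmetric] uu)
  have "I = ennreal (1 / u powr p) * (ennreal (u powr p) * I)"
    using u by (simp add: mult.assoc[symmetric] ennreal_mult'[symmetric])
  also have "\<dots> = ennreal (Gamma p / u powr p)"
    unfolding eq[symmetric] using u by (simp add: ennreal_mult'[symmetric])
  finally show ?thesis unfolding I_def .
qed


lemma Gamma_real_nz[simp]: "x > (0::real) \<Longrightarrow> Gamma x \<noteq> 0"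
  using Gamma_real_pos[of x] by linarith

definition gdens :: "real \<Rightarrow> real \<Rightarrow> real" where
  "gdens a x = (if x > 0 then x powr (a - 1) * exp (- x) / Gamma a else 0)"

lemma gamma_measure_gdens: "gamma_measure a = density lborel (\<lambda>x. ennreal (gdens a x))"
  by (simp add: gamma_measure_def gdens_def)

lemma gdens_meas[measurable]: "gdens a \<in> borel_measurable borel"
  unfolding gdens_def by measurable

lemma sets_gamma[simp, measurable_cong]: "sets (gamma_measure a) = sets borel"
  by (simp add: gamma_measure_gdens)

lemma space_gamma[simp]: "space (gamma_measure a) = UNIV"
  by (simp add: gamma_measure_gdens)

lemma gamma_lap:
  fixes a t :: real and m :: nat
  assumes a: "a > 0" and t: "t \<ge> 0"
  shows "(\<integral>\<^sup>+x. ennreal (x ^ m * exp (- (t * x))) \<partial>gamma_measure a)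
     = ennreal (Gamma (a + real m) / (Gamma a * (1 + t) powr (a + real m)))"
proof -
  have "(\<integral>\<^sup>+x. ennreal (x ^ m * exp (- (t * x))) \<partial>gamma_measure a)
      = (\<integral>\<^sup>+x. ennreal (gdens a x) * ennreal (x ^ m * exp (- (t * x))) \<partial>lborel)"
    unfolding gamma_measure_gdens by (subst nn_integral_density) auto
  also have "\<dots> = (\<integral>\<^sup>+x. ennreal (1 / Gamma a) * ennreal (indicator {0<..} x * x powr (a + real m - 1) * exp (- ((1 + t) * x))) \<partial>lborel)"
  proof (intro nn_integral_cong)
    fix x :: real
    show "ennreal (gdens a x) * ennreal (x ^ m * exp (- (t * x))) =
         ennreal (1 / Gamma a) * ennreal (indicator {0<..} x * x powr (a + real m - 1) * exp (- ((1 + t) * x)))"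
    proof (cases "x > 0")
      case True
      have "x powr (a - 1) * x ^ m = x powr (a + real m - 1)"
        using True by (simp add: powr_realpow[symmetric] powr_add[symmetric] algebra_simps)
      moreover have "exp (- x) * exp (- (t * x)) = exp (- ((1 + t) * x))"
        by (simp add: exp_add[symmetric] algebra_simps)
      ultimately have "gdens a x * (x ^ m * exp (- (t * x))) = 1 / Gamma a * (indicator {0<..} x * x powr (a + real m - 1) * exp (- ((1 + t) * x)))"
        using True by (simp add: gdens_def field_simps) (metis mult.assoc mult.commute)
      then show ?thesis using True a
        by (simp add: ennreal_mult'[symmetric] gdens_def)
    qed (simp add: gdens_def)
  qed
  also have "\<dots> = ennreal (1 / Gamma a) * ennreal (Gamma (a + real m) / (1 + t) powr (a + real m))"
    using a t by (subst nn_integral_cmult) (auto simp: GL)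
  also have "\<dots> = ennreal (Gamma (a + real m) / (Gamma a * (1 + t) powr (a + real m)))"
    using a t by (simp add: ennreal_mult'[symmetric])
  finally show ?thesis .
qed

lemma prob_gamma: assumes "a > 0" shows "prob_space (gamma_measure a)"
proof
  have "(\<integral>\<^sup>+x. ennreal (x ^ 0 * exp (- (0 * x))) \<partial>gamma_measure a) = 1"
    using gamma_lap[of a 0 0] assms by simp
  then show "emeasure (gamma_measure a) (space (gamma_measure a)) = 1"
    by (simp add: nn_integral_const)
qed

lemma AE_gamma_pos: "AE x in gamma_measure a. x > 0"
  unfolding gamma_measure_gdens by (subst AE_density) (auto simp: gdens_def)

lemma psf_lborel: "pair_sigma_finite (lborel::real measure) (lborel::real measure)"
  by (simp add: lborel.sigma_finite_measure_axioms pair_sigma_finite.intro)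

lemma J_integral:
  fixes q A :: real
  assumes q: "q > 0" and A: "A > 0"
  shows "(\<integral>\<^sup>+t. ennreal (indicator {0<..} t * t powr (q - 1) / (1 + t) powr (A + q)) \<partial>lborel)
     = ennreal (Gamma q * Gamma A / Gamma (A + q))"
proof -
  define H where "H = (\<lambda>t s::real. ennreal (indicator {0<..} t * t powr (q - 1) / Gamma (A + q) * (indicator {0<..} s * s powr (A + q - 1) * exp (- ((1 + t) * s)))))"
  have Hm: "(\<lambda>(s, t). H t s) \<in> borel_measurable (lborel \<Otimes>\<^sub>M lborel)"
    unfolding H_def by measurable
  have "(\<integral>\<^sup>+t. ennreal (indicator {0<..} t * t powr (q - 1) / (1 + t) powr (A + q)) \<partial>lborel)
      = (\<integral>\<^sup>+t. (\<integral>\<^sup>+s. H t s \<partial>lborel) \<partial>lborel)"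
  proof (intro nn_integral_cong)
    fix t :: real
    show "ennreal (indicator {0<..} t * t powr (q - 1) / (1 + t) powr (A + q)) = (\<integral>\<^sup>+s. H t s \<partial>lborel)"
    proof (cases "t > 0")
      case True
      have "(\<integral>\<^sup>+s. H t s \<partial>lborel) = (\<integral>\<^sup>+s. ennreal (t powr (q - 1) / Gamma (A + q)) * ennreal (indicator {0<..} s * s powr (A + q - 1) * exp (- ((1 + t) * s))) \<partial>lborel)"
        unfolding H_def using True A q
        by (intro nn_integral_cong) (simp add: ennreal_mult'[symmetric])
      also have "\<dots> = ennreal (t powr (q - 1) / Gamma (A + q)) * ennreal (Gamma (A + q) / (1 + t) powr (A + q))"
        using True A q by (subst nn_integral_cmult) (auto simp: GL)
      also have "\<dots> = ennreal (t powr (q - 1) / (1 + t) powr (A + q))"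
        using True A q by (simp add: ennreal_mult'[symmetric])
      finally show ?thesis using True by simp
    qed (simp add: H_def)
  qed
  also have "\<dots> = (\<integral>\<^sup>+s. (\<integral>\<^sup>+t. H t s \<partial>lborel) \<partial>lborel)"
    using pair_sigma_finite.Fubini'[where f="\<lambda>s t. H t s", OF psf_lborel Hm] by simp
  also have "\<dots> = (\<integral>\<^sup>+s. ennreal (Gamma q / Gamma (A + q)) * ennreal (indicator {0<..} s * s powr (A - 1) * exp (- (1 * s))) \<partial>lborel)"
  proof (intro nn_integral_cong)
    fix s :: real
    show "(\<integral>\<^sup>+t. H t s \<partial>lborel) = ennreal (Gamma q / Gamma (A + q)) * ennreal (indicator {0<..} s * s powr (A - 1) * exp (- (1 * s)))"
    proof (cases "s > 0")
      case True
      have "(\<integral>\<^sup>+t. H t s \<partial>lborel) = (\<integral>\<^sup>+t. ennreal (s powr (A + q - 1) * exp (- s) / Gamma (A + q)) * ennreal (indicator {0<..} t * t powr (q - 1) * exp (- (s * t))) \<partial>lborel)"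
        unfolding H_def using True A q
        by (intro nn_integral_cong) (simp add: ennreal_mult'[symmetric] exp_add[symmetric] algebra_simps)
      also have "\<dots> = ennreal (s powr (A + q - 1) * exp (- s) / Gamma (A + q)) * ennreal (Gamma q / s powr q)"
        using True A q by (subst nn_integral_cmult) (auto simp: GL)
      also have "\<dots> = ennreal (Gamma q / Gamma (A + q)) * ennreal (indicator {0<..} s * s powr (A - 1) * exp (- (1 * s)))"
      proof -
        have e: "s powr (A + q - 1) = s powr (A - 1) * s powr q"
          using True by (simp add: powr_add[symmetric] algebra_simps)
        have "s powr q > 0" using True by simp
        then have "s powr (A + q - 1) * exp (- s) / Gamma (A + q) * (Gamma q / s powr q) = Gamma q / Gamma (A + q) * (s powr (A - 1) * exp (- s))"
          by (simp add: field_simps e)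
        then show ?thesis using True A q by (simp add: ennreal_mult'[symmetric])
      qed
      finally show ?thesis .
    qed (simp add: H_def)
  qed
  also have "\<dots> = ennreal (Gamma q / Gamma (A + q)) * ennreal (Gamma A / 1 powr A)"
    using A GL[OF A, of 1] by (subst nn_integral_cmult) auto
  also have "\<dots> = ennreal (Gamma q * Gamma A / Gamma (A + q))"
    using A q by (simp add: ennreal_mult'[symmetric])
  finally show ?thesis .
qed


definition Om :: "nat \<Rightarrow> (nat \<Rightarrow> real) \<Rightarrow> (nat \<Rightarrow> real) measure" where
  "Om N a = PiM {..<N} (\<lambda>i. gamma_measure (a i))"

lemma prob_Om: assumes "\<And>i. 0 < a i" shows "prob_space (Om N a)"
  unfolding Om_def using assms by (intro prob_space_PiM prob_gamma) auto

lemma AE_Om_pos: assumes "\<And>i. 0 < a i" shows "AE g in Om N a. \<forall>l\<in>{..<N}. g l > 0"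
proof (rule AE_finite_allI)
  fix l assume l: "l \<in> {..<N}"
  show "AE g in Om N a. g l > 0"
    unfolding Om_def using AE_PiM_component[of "{..<N}" "\<lambda>i. gamma_measure (a i)" l "\<lambda>x. 0 < x"] l assms prob_gamma AE_gamma_pos
    by auto
qed simp

lemma dir_nn_moment:
  fixes a :: "nat \<Rightarrow> real" and m :: "nat \<Rightarrow> nat" and N q :: nat
  assumes apos: "\<And>i. 0 < a i" and q: "q = (\<Sum>l<N. m l)" "q \<ge> 1"
  shows "(\<integral>\<^sup>+g. ennreal ((\<Prod>l<N. g l ^ m l) / (\<Sum>l<N. g l) ^ q) \<partial>Om N a)
       = ennreal ((\<Prod>l<N. Gamma (a l + real (m l)) / Gamma (a l)) * Gamma (\<Sum>l<N. a l) / Gamma ((\<Sum>l<N. a l) + real q))"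
proof -
  interpret PS: product_sigma_finite "\<lambda>i. gamma_measure (a i)"
    unfolding product_sigma_finite_def using prob_gamma[OF apos] prob_space_imp_sigma_finite by blast
  interpret OP: prob_space "Om N a" by (rule prob_Om[OF apos])
  have psf: "pair_sigma_finite lborel (Om N a)"
    by (simp add: lborel.sigma_finite_measure_axioms pair_sigma_finite.intro OP.sigma_finite_measure_axioms)
  define A where "A = (\<Sum>l<N. a l)"
  define C where "C = (\<Prod>l<N. Gamma (a l + real (m l)) / Gamma (a l))"
  have Cpos: "C > 0" unfolding C_def using apos by (intro prod_pos) (auto intro!: divide_pos_pos Gamma_real_pos add_pos_nonneg)
  have N: "N \<noteq> 0" using q by (cases N) auto
  have Apos: "A > 0" unfolding A_def using N apos by (intro sum_pos) auto
  have qpos: "real q > 0" using q(2) by simp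
  define H where "H = (\<lambda>t (g::nat\<Rightarrow>real). ennreal (indicator {0<..} t * t powr (real q - 1) / Gamma (real q)) * (\<Prod>l<N. ennreal (g l ^ m l * exp (- (t * g l)))))"
  have Hm: "(\<lambda>(t, g). H t g) \<in> borel_measurable (lborel \<Otimes>\<^sub>M Om N a)"
    unfolding H_def Om_def by measurable
  have step1: "(\<integral>\<^sup>+g. ennreal ((\<Prod>l<N. g l ^ m l) / (\<Sum>l<N. g l) ^ q) \<partial>Om N a) = (\<integral>\<^sup>+g. (\<integral>\<^sup>+t. H t g \<partial>lborel) \<partial>Om N a)"
  proof (rule nn_integral_cong_AE)
    show "AE g in Om N a. ennreal ((\<Prod>l<N. g l ^ m l) / (\<Sum>l<N. g l) ^ q) = (\<integral>\<^sup>+t. H t g \<partial>lborel)"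
      using AE_Om_pos[OF apos, of N]
    proof eventually_elim
      case (elim g)
      define S where "S = (\<Sum>l<N. g l)"
      have Spos: "S > 0" unfolding S_def using elim N by (intro sum_pos) auto
      have gm: "(\<Prod>l<N. g l ^ m l) \<ge> 0" using elim by (intro prod_nonneg) (auto intro!: zero_le_power less_imp_le)
      have "(\<integral>\<^sup>+t. H t g \<partial>lborel) = (\<integral>\<^sup>+t. ennreal ((\<Prod>l<N. g l ^ m l) / Gamma (real q)) * ennreal (indicator {0<..} t * t powr (real q - 1) * exp (- (S * t))) \<partial>lborel)"
      proof (intro nn_integral_cong)
        fix t :: real
        have "(\<Prod>l<N. ennreal (g l ^ m l * exp (- (t * g l)))) = ennreal (\<Prod>l<N. g l ^ m l * exp (- (t * g l)))"
          using elim by (intro prod_ennreal) (auto intro!: mult_nonneg_nonneg zero_le_power less_imp_le)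
        also have "(\<Prod>l<N. g l ^ m l * exp (- (t * g l))) = (\<Prod>l<N. g l ^ m l) * exp (- (S * t))"
          by (simp add: prod.distrib exp_sum[symmetric] S_def sum_negf sum_distrib_left mult.commute)
        finally have "(\<Prod>l<N. ennreal (g l ^ m l * exp (- (t * g l)))) = ennreal ((\<Prod>l<N. g l ^ m l) * exp (- (S * t)))" .
        then show "H t g = ennreal ((\<Prod>l<N. g l ^ m l) / Gamma (real q)) * ennreal (indicator {0<..} t * t powr (real q - 1) * exp (- (S * t)))"
          unfolding H_def using gm qpos
          by (cases "t > 0") (simp_all add: ennreal_mult'[symmetric] field_simps)
      qed
      also have "\<dots> = ennreal ((\<Prod>l<N. g l ^ m l) / Gamma (real q)) * ennreal (Gamma (real q) / S powr real q)"
        using Spos qpos by (subst nn_integral_cmult) (auto simp: GL)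
      also have "\<dots> = ennreal ((\<Prod>l<N. g l ^ m l) / S ^ q)"
        using Spos qpos gm by (simp add: ennreal_mult'[symmetric] powr_realpow)
      finally show ?case by (simp add: S_def)
    qed
  qed
  also have "\<dots> = (\<integral>\<^sup>+t. (\<integral>\<^sup>+g. H t g \<partial>Om N a) \<partial>lborel)"
    using pair_sigma_finite.Fubini'[OF psf Hm] by simp
  also have "\<dots> = (\<integral>\<^sup>+t. ennreal (C / Gamma (real q)) * ennreal (indicator {0<..} t * t powr (real q - 1) / (1 + t) powr (A + real q)) \<partial>lborel)"
  proof (intro nn_integral_cong)
    fix t :: real
    show "(\<integral>\<^sup>+g. H t g \<partial>Om N a) = ennreal (C / Gamma (real q)) * ennreal (indicator {0<..} t * t powr (real q - 1) / (1 + t) powr (A + real q))"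
    proof (cases "t > 0")
      case True
      have "(\<integral>\<^sup>+g. H t g \<partial>Om N a) = ennreal (t powr (real q - 1) / Gamma (real q)) * (\<integral>\<^sup>+g. (\<Prod>l<N. ennreal (g l ^ m l * exp (- (t * g l)))) \<partial>Om N a)"
        unfolding H_def using True by (subst nn_integral_cmult) (auto simp: Om_def)
      also have "(\<integral>\<^sup>+g. (\<Prod>l<N. ennreal (g l ^ m l * exp (- (t * g l)))) \<partial>Om N a)
          = (\<Prod>l<N. (\<integral>\<^sup>+x. ennreal (x ^ m l * exp (- (t * x))) \<partial>gamma_measure (a l)))"
        unfolding Om_def by (rule PS.product_nn_integral_prod) auto
      also have "\<dots> = (\<Prod>l<N. ennreal (Gamma (a l + real (m l)) / (Gamma (a l) * (1 + t) powr (a l + real (m l)))))"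
        using True apos by (intro prod.cong refl gamma_lap) auto
      also have "\<dots> = ennreal (\<Prod>l<N. Gamma (a l + real (m l)) / (Gamma (a l) * (1 + t) powr (a l + real (m l))))"
      proof (intro prod_ennreal)
        fix l assume "l \<in> {..<N}"
        have "0 < a l + real (m l)" using apos[of l] by linarith
        then have "0 < Gamma (a l + real (m l))" "0 < Gamma (a l)" "0 < (1 + t) powr (a l + real (m l))"
          using apos[of l] True by auto
        then show "0 \<le> Gamma (a l + real (m l)) / (Gamma (a l) * (1 + t) powr (a l + real (m l)))"
          by simp
      qed
      also have "(\<Prod>l<N. Gamma (a l + real (m l)) / (Gamma (a l) * (1 + t) powr (a l + real (m l)))) = C / (1 + t) powr (A + real q)"
      proof -
        have "(1 + t) powr (A + real q) = (\<Prod>l<N. (1 + t) powr (a l + real (m l)))"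
          using True by (simp add: A_def q(1) powr_sum[symmetric] sum.distrib)
        then show ?thesis by (simp add: C_def prod_dividef prod.distrib)
      qed
      finally show ?thesis using True Cpos qpos
        by (simp add: ennreal_mult'[symmetric])
    qed (simp add: H_def)
  qed
  also have "\<dots> = ennreal (C / Gamma (real q)) * ennreal (Gamma (real q) * Gamma A / Gamma (A + real q))"
    using Apos qpos by (subst nn_integral_cmult) (auto simp: J_integral)
  also have "\<dots> = ennreal (C * Gamma A / Gamma (A + real q))"
    using Apos qpos Cpos by (simp add: ennreal_mult'[symmetric])
  finally show ?thesis by (simp add: C_def A_def)
qed


lemma Gamma_succ: "x > (0::real) \<Longrightarrow> Gamma (x + 1) = x * Gamma x"
  by (rule Gamma_plus1) (auto elim!: nonpos_Ints_cases)

definition nrm :: "nat \<Rightarrow> (nat \<Rightarrow> real) \<Rightarrow> (nat \<Rightarrow> real)" where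
  "nrm N g = restrict (\<lambda>i. g i / (\<Sum>j<N. g j)) {..<N}"

lemma dirichlet_Om: "dirichlet N a = distr (Om N a) (PiM {..<N} (\<lambda>_. borel)) (nrm N)"
  unfolding dirichlet_def Om_def nrm_def[abs_def] by simp

lemma nrm_meas[measurable]: "nrm N \<in> measurable (Om N a) (PiM {..<N} (\<lambda>_. borel))"
  unfolding nrm_def Om_def by measurable

lemma prob_dirichlet: assumes "\<And>i. 0 < a i" shows "prob_space (dirichlet N a)"
  unfolding dirichlet_Om by (rule prob_space.prob_space_distr[OF prob_Om[OF assms]]) simp

lemma space_dirichlet: "space (dirichlet N a) = space (PiM {..<N} (\<lambda>_. borel))"
  by (simp add: dirichlet_def)

lemma sets_dirichlet: "sets (dirichlet N a) = sets (PiM {..<N} (\<lambda>_. (borel :: real measure)))"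
  by (simp add: dirichlet_def)

lemma AE_dirichlet:
  assumes apos: "\<And>i. 0 < a i" and N: "N > 0"
  shows "AE w in dirichlet N a. (\<forall>l<N. 0 \<le> w l) \<and> (\<Sum>l<N. w l) = 1"
proof -
  have "AE g in Om N a. (\<forall>l<N. 0 \<le> nrm N g l) \<and> (\<Sum>l<N. nrm N g l) = 1"
    using AE_Om_pos[OF apos, of N]
  proof eventually_elim
    case (elim g)
    have S: "(\<Sum>j<N. g j) > 0" using elim N by (intro sum_pos) auto
    have "(\<Sum>l<N. nrm N g l) = (\<Sum>l<N. g l / (\<Sum>j<N. g j))" by (simp add: nrm_def)
    also have "\<dots> = 1" using S by (simp add: sum_divide_distrib[symmetric])
    moreover have "\<And>l. l < N \<Longrightarrow> 0 \<le> nrm N g l" using elim S by (auto simp: nrm_def intro!: divide_nonneg_pos less_imp_le)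
    ultimately show ?case by auto
  qed
  then show ?thesis
    unfolding dirichlet_Om by (subst AE_distr_iff) auto
qed

lemma dir_moment:
  fixes a :: "nat \<Rightarrow> real" and m :: "nat \<Rightarrow> nat" and N q :: nat
  assumes apos: "\<And>i. 0 < a i" and q: "q = (\<Sum>l<N. m l)" "q \<ge> 1"
  shows "(\<integral>w. (\<Prod>l<N. w l ^ m l) \<partial>dirichlet N a)
       = (\<Prod>l<N. Gamma (a l + real (m l)) / Gamma (a l)) * Gamma (\<Sum>l<N. a l) / Gamma ((\<Sum>l<N. a l) + real q)"
proof -
  have N: "N > 0" using q by (cases N) auto
  have "(\<integral>w. (\<Prod>l<N. w l ^ m l) \<partial>dirichlet N a) = (\<integral>g. (\<Prod>l<N. nrm N g l ^ m l) \<partial>Om N a)"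
    unfolding dirichlet_Om by (subst integral_distr) auto
  also have "\<dots> = (\<integral>g. (\<Prod>l<N. g l ^ m l) / (\<Sum>l<N. g l) ^ q \<partial>Om N a)"
  proof (intro Bochner_Integration.integral_cong refl)
    fix g assume "g \<in> space (Om N a)"
    have "(\<Prod>l<N. nrm N g l ^ m l) = (\<Prod>l<N. g l ^ m l / (\<Sum>j<N. g j) ^ m l)"
      by (intro prod.cong refl) (simp add: nrm_def power_divide)
    also have "\<dots> = (\<Prod>l<N. g l ^ m l) / (\<Sum>l<N. g l) ^ q"
      by (simp add: prod_dividef q(1) power_sum)
    finally show "(\<Prod>l<N. nrm N g l ^ m l) = (\<Prod>l<N. g l ^ m l) / (\<Sum>l<N. g l) ^ q" .
  qed
  also have "\<dots> = enn2real (\<integral>\<^sup>+g. ennreal ((\<Prod>l<N. g l ^ m l) / (\<Sum>l<N. g l) ^ q) \<partial>Om N a)"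
  proof (rule integral_eq_nn_integral)
    show "(\<lambda>g. (\<Prod>l<N. g l ^ m l) / (\<Sum>l<N. g l) ^ q) \<in> borel_measurable (Om N a)"
      unfolding Om_def by measurable
    show "AE g in Om N a. 0 \<le> (\<Prod>l<N. g l ^ m l) / (\<Sum>l<N. g l) ^ q"
      using AE_Om_pos[OF apos, of N]
    proof eventually_elim
      case (elim g)
      have "\<And>l. l < N \<Longrightarrow> 0 \<le> g l" using elim by (simp add: less_imp_le)
      then show ?case by (auto intro!: divide_nonneg_nonneg prod_nonneg sum_nonneg zero_le_power)
    qed
  qed
  also have "\<dots> = (\<Prod>l<N. Gamma (a l + real (m l)) / Gamma (a l)) * Gamma (\<Sum>l<N. a l) / Gamma ((\<Sum>l<N. a l) + real q)"
  proof -
    have A: "(\<Sum>l<N. a l) > 0" using N apos by (intro sum_pos) auto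
    have "(\<Prod>l<N. Gamma (a l + real (m l)) / Gamma (a l)) > 0"
    proof (intro prod_pos)
      fix l assume "l \<in> {..<N}"
      have "0 < a l + real (m l)" using apos[of l] by linarith
      then show "0 < Gamma (a l + real (m l)) / Gamma (a l)" using apos[of l] by simp
    qed
    moreover have "Gamma (\<Sum>l<N. a l) > 0" "Gamma ((\<Sum>l<N. a l) + real q) > 0" using A by auto
    ultimately show ?thesis using dir_nn_moment[OF apos q] by simp
  qed
  finally show ?thesis .
qed

lemma prod_pow_delta: "i < (N::nat) \<Longrightarrow> (\<Prod>l<N. (w l :: real) ^ (if l = i then k else 0)) = w i ^ k"
proof -
  assume i: "i < N"
  have "(\<Prod>l<N. w l ^ (if l = i then k else 0)) = (\<Prod>l<N. if l = i then w l ^ k else 1)"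
    by (intro prod.cong) auto
  also have "\<dots> = w i ^ k" using i by (subst prod.delta) auto
  finally show ?thesis .
qed

lemma dir_mean:
  assumes apos: "\<And>i. 0 < a i" and i: "i < N"
  shows "(\<integral>w. w i \<partial>dirichlet N a) = a i / (\<Sum>l<N. a l)"
proof -
  define m where "m = (\<lambda>l. if l = i then 1 else (0::nat))"
  have q: "1 = (\<Sum>l<N. m l)" using i by (simp add: m_def)
  have A: "(\<Sum>l<N. a l) > 0" using i apos by (intro sum_pos) auto
  have "(\<integral>w. w i \<partial>dirichlet N a) = (\<integral>w. (\<Prod>l<N. w l ^ m l) \<partial>dirichlet N a)"
    using prod_pow_delta[OF i, of _ 1] by (simp add: m_def)
  also have "\<dots> = (\<Prod>l<N. Gamma (a l + real (m l)) / Gamma (a l)) * Gamma (\<Sum>l<N. a l) / Gamma ((\<Sum>l<N. a l) + real 1)"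
    by (rule dir_moment[OF apos q]) simp
  also have "(\<Prod>l<N. Gamma (a l + real (m l)) / Gamma (a l)) = (\<Prod>l<N. if l = i then a i else 1)"
    using apos by (intro prod.cong refl) (auto simp: m_def Gamma_succ)
  also have "\<dots> = a i" using i by (simp add: prod.delta)
  finally show ?thesis using A by (simp add: Gamma_succ)
qed

lemma cancel_aux: "g \<noteq> 0 \<Longrightarrow> x * g / (g * y) = x / (y::real)"
  by (cases "y = 0") (simp_all add: field_simps)

lemma dir_sq:
  assumes apos: "\<And>i. 0 < a i" and i: "i < N"
  shows "(\<integral>w. w i * w i \<partial>dirichlet N a) = a i * (a i + 1) / ((\<Sum>l<N. a l) * ((\<Sum>l<N. a l) + 1))"
proof -
  define m where "m = (\<lambda>l. if l = i then 2 else (0::nat))"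
  have q: "2 = (\<Sum>l<N. m l)" using i by (simp add: m_def)
  define A where "A = (\<Sum>l<N. a l)"
  have A: "A > 0" unfolding A_def using i apos by (intro sum_pos) auto
  have "(\<integral>w. w i * w i \<partial>dirichlet N a) = (\<integral>w. (\<Prod>l<N. w l ^ m l) \<partial>dirichlet N a)"
    using prod_pow_delta[OF i, of _ 2] by (simp add: m_def power2_eq_square)
  also have "\<dots> = (\<Prod>l<N. Gamma (a l + real (m l)) / Gamma (a l)) * Gamma A / Gamma (A + real 2)"
    unfolding A_def by (rule dir_moment[OF apos q]) simp
  also have "(\<Prod>l<N. Gamma (a l + real (m l)) / Gamma (a l)) = (\<Prod>l<N. if l = i then a i * (a i + 1) else 1)"
  proof (intro prod.cong refl)
    fix l assume "l \<in> {..<N}"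
    show "Gamma (a l + real (m l)) / Gamma (a l) = (if l = i then a i * (a i + 1) else 1)"
    proof (cases "l = i")
      case True
      have "Gamma (a i + 2) = (a i + 1) * (a i * Gamma (a i))"
        using Gamma_succ[of "a i + 1"] Gamma_succ[of "a i"] apos[of i] by (simp add: add.assoc)
      then show ?thesis using True apos[of i] by (simp add: m_def)
    qed (use apos in \<open>simp add: m_def\<close>)
  qed
  also have "\<dots> = a i * (a i + 1)" using i by (simp add: prod.delta)
  also have "Gamma (A + real 2) = Gamma A * (A * (A + 1))"
    using Gamma_succ[of "A + 1"] Gamma_succ[of A] A by (simp add: add.assoc)
  finally show ?thesis unfolding A_def[symmetric] using cancel_aux[OF Gamma_real_nz[OF A]] by simp
qed

lemma dir_cross:
  assumes apos: "\<And>i. 0 < a i" and i: "i < N" and j: "j < N" and ij: "i \<noteq> j"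
  shows "(\<integral>w. w i * w j \<partial>dirichlet N a) = a i * a j / ((\<Sum>l<N. a l) * ((\<Sum>l<N. a l) + 1))"
proof -
  define m where "m = (\<lambda>l. (if l = i then 1 else 0) + (if l = j then 1 else (0::nat)))"
  have q: "2 = (\<Sum>l<N. m l)" unfolding m_def using i j by (simp add: sum.distrib)
  define A where "A = (\<Sum>l<N. a l)"
  have A: "A > 0" unfolding A_def using i apos by (intro sum_pos) auto
  have pw: "(\<Prod>l<N. w l ^ m l) = w i * w j" for w :: "nat \<Rightarrow> real"
    unfolding m_def power_add prod.distrib using prod_pow_delta[OF i, of w 1] prod_pow_delta[OF j, of w 1] by simp
  have "(\<integral>w. w i * w j \<partial>dirichlet N a) = (\<integral>w. (\<Prod>l<N. w l ^ m l) \<partial>dirichlet N a)"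
    by (simp add: pw)
  also have "\<dots> = (\<Prod>l<N. Gamma (a l + real (m l)) / Gamma (a l)) * Gamma A / Gamma (A + real 2)"
    unfolding A_def by (rule dir_moment[OF apos q]) simp
  also have "(\<Prod>l<N. Gamma (a l + real (m l)) / Gamma (a l)) = (\<Prod>l<N. (if l = i then a l else 1) * (if l = j then a l else 1))"
    using apos ij by (intro prod.cong refl) (auto simp: m_def Gamma_succ)
  also have "\<dots> = a i * a j" unfolding prod.distrib using i j by (subst prod.delta, simp)+ simp
  also have "Gamma (A + real 2) = Gamma A * (A * (A + 1))"
    using Gamma_succ[of "A + 1"] Gamma_succ[of A] A by (simp add: add.assoc)
  finally show ?thesis unfolding A_def[symmetric] using cancel_aux[OF Gamma_real_nz[OF A]] by simp
qed

lemma sum_lt_if: "(n::nat) \<le> N \<Longrightarrow> (\<Sum>l<N. if l < n then f l else (0::'b::comm_monoid_add)) = (\<Sum>l<n. f l)"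
proof -
  assume "n \<le> N"
  then have "{..<N} \<inter> {l. l < n} = {..<n}" by auto
  then show ?thesis by (simp add: sum.If_cases)
qed

lemma wpm_uniform:
  assumes n: "n \<ge> 1"
  shows "wpm M (n + T) (atoms n xs xt) (\<lambda>l. if l < n then 1 / real n else 0) = wpm M n xs (\<lambda>_. 1 / real n)"
proof -
  have "(\<lambda>A. \<Sum>l<n + T. ennreal (if l < n then 1 / real n else 0) * indicator A (atoms n xs xt l))
      = (\<lambda>A. \<Sum>l<n. ennreal (1 / real n) * indicator A (xs l))"
  proof
    fix A
    have "(\<Sum>l<n + T. ennreal (if l < n then 1 / real n else 0) * indicator A (atoms n xs xt l))
        = (\<Sum>l<n + T. if l < n then ennreal (1 / real n) * indicator A (xs l) else 0)"
      by (intro sum.cong refl) (auto simp: atoms_def)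
    also have "\<dots> = (\<Sum>l<n. ennreal (1 / real n) * indicator A (xs l))" by (rule sum_lt_if) simp
    finally show "(\<Sum>l<n + T. ennreal (if l < n then 1 / real n else 0) * indicator A (atoms n xs xt l))
        = (\<Sum>l<n. ennreal (1 / real n) * indicator A (xs l))" .
  qed
  then show ?thesis unfolding wpm_def by simp
qed

context kern begin

lemma pointwise:
  fixes \<Theta> :: "'t set" and Pt :: "'t \<Rightarrow> 'a measure" and thstar :: "'a measure \<Rightarrow> 't"
    and P0 :: "'a measure" and n T :: nat and xs xt :: "nat \<Rightarrow> 'a" and w :: "nat \<Rightarrow> real"
  assumes Pt_prob: "\<And>\<theta>. \<theta> \<in> \<Theta> \<Longrightarrow> prob_space (Pt \<theta>) \<and> sets (Pt \<theta>) = sets M"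
    and thstar_min: "\<And>P. prob_space P \<Longrightarrow> sets P = sets M \<Longrightarrow>
           thstar P \<in> \<Theta> \<and> (\<forall>\<theta>\<in>\<Theta>. mmd2 k P (Pt (thstar P)) \<le> mmd2 k P (Pt \<theta>))"
    and P0: "prob_space P0" "sets P0 = sets M"
    and n: "n \<ge> 1"
    and xs: "\<forall>i<n. xs i \<in> space M" and xt: "\<forall>j<T. xt j \<in> space M"
    and w: "\<forall>l<n+T. 0 \<le> w l" "(\<Sum>l<n+T. w l) = 1"
  shows "mmd k P0 (Pt (thstar (wpm M (n+T) (atoms n xs xt) w)))
     \<le> (INF \<theta>\<in>\<Theta>. mmd k P0 (Pt \<theta>)) + 2 * mmd k P0 (wpm M n xs (\<lambda>_. 1 / real n))
       + 2 * sqrt (\<Sum>i<n. \<Sum>j<n. (1 / real n - w i) * (1 / real n - w j) * k (xs i) (xs j))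
       + 2 * (1 - (\<Sum>i<n. w i))"
proof -
  define N where "N = n + T"
  define z where "z = atoms n xs xt"
  have z: "\<forall>l<N. z l \<in> space M" using xs xt by (auto simp: z_def atoms_def N_def)
  define u where "u = (\<lambda>l. if l < n then 1 / real n else (0::real))"
  have u: "\<forall>l<N. 0 \<le> u l" by (simp add: u_def)
  have su: "(\<Sum>l<N. u l) = 1"
  proof -
    have "(\<Sum>l<N. u l) = (\<Sum>l<n. 1 / real n)" unfolding u_def N_def by (rule sum_lt_if) simp
    then show ?thesis using n by simp
  qed
  have wN: "\<forall>l<N. 0 \<le> w l" "(\<Sum>l<N. w l) = 1" using w by (auto simp: N_def)
  define Pw where "Pw = wpm M N z w"
  define Pn where "Pn = wpm M N z u"
  have Pw: "prob_space Pw" "sets Pw = sets M"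
    unfolding Pw_def using prob_wpm[OF z wN] sets_wpm[OF z] by auto
  have Pn: "prob_space Pn" "sets Pn = sets M"
    unfolding Pn_def using prob_wpm[OF z u su] sets_wpm[OF z] by auto
  have Pn_eq: "Pn = wpm M n xs (\<lambda>_. 1 / real n)"
    unfolding Pn_def N_def z_def u_def by (rule wpm_uniform[OF n])
  define th where "th = thstar Pw"
  have th: "th \<in> \<Theta>" and thmin: "\<forall>\<theta>\<in>\<Theta>. mmd2 k Pw (Pt th) \<le> mmd2 k Pw (Pt \<theta>)"
    using thstar_min[OF Pw] by (auto simp: th_def)
  have Pth: "prob_space (Pt th)" "sets (Pt th) = sets M" using Pt_prob[OF th] by auto
  have c1: "mmd k P0 (Pt th) - 2 * mmd k P0 Pw \<le> (INF \<theta>\<in>\<Theta>. mmd k P0 (Pt \<theta>))"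
  proof (rule cINF_greatest)
    show "\<Theta> \<noteq> {}" using th by auto
    fix \<theta> assume \<theta>: "\<theta> \<in> \<Theta>"
    have Pt\<theta>: "prob_space (Pt \<theta>)" "sets (Pt \<theta>) = sets M" using Pt_prob[OF \<theta>] by auto
    have "mmd k P0 (Pt th) \<le> mmd k P0 Pw + mmd k Pw (Pt th)" by (rule mmd_triangle[OF P0 Pw Pth])
    also have "mmd k Pw (Pt th) \<le> mmd k Pw (Pt \<theta>)" unfolding mmd_def using thmin \<theta> by (auto intro: real_sqrt_le_mono)
    also have "mmd k Pw (Pt \<theta>) \<le> mmd k Pw P0 + mmd k P0 (Pt \<theta>)" by (rule mmd_triangle[OF Pw P0 Pt\<theta>])
    also have "mmd k Pw P0 = mmd k P0 Pw" by (rule mmd_sym[OF Pw P0])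
    finally show "mmd k P0 (Pt th) - 2 * mmd k P0 Pw \<le> mmd k P0 (Pt \<theta>)" by simp
  qed
  have c2: "mmd k P0 Pw \<le> mmd k P0 Pn + mmd k Pn Pw" by (rule mmd_triangle[OF P0 Pn Pw])
  define G where "G = (\<lambda>a b. k (z a) (z b))"
  have Gpsd: "\<And>c. 0 \<le> qf N G c" unfolding qf_def G_def using z by (intro k_psd_pts) auto
  define d where "d = (\<lambda>l. u l - w l)"
  have e: "mmd2 k Pn Pw = qf N G d"
  proof -
    have k1: "kint k Pn Pn = (\<Sum>a<N. \<Sum>b<N. u a * u b * G a b)"
      unfolding Pn_def G_def by (rule kint_wpm_wpm[OF z u u])
    have k2: "kint k Pn Pw = (\<Sum>a<N. \<Sum>b<N. u a * w b * G a b)"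
      unfolding Pn_def Pw_def G_def by (rule kint_wpm_wpm[OF z u wN(1)])
    have k3: "kint k Pw Pn = (\<Sum>a<N. \<Sum>b<N. w a * u b * G a b)"
      unfolding Pn_def Pw_def G_def by (rule kint_wpm_wpm[OF z wN(1) u])
    have k4: "kint k Pw Pw = (\<Sum>a<N. \<Sum>b<N. w a * w b * G a b)"
      unfolding Pw_def G_def by (rule kint_wpm_wpm[OF z wN(1) wN(1)])
    have k5: "kint k Pw Pn = kint k Pn Pw" by (rule kint_sym[OF Pw Pn])
    have "qf N G d = kint k Pn Pn - kint k Pn Pw - kint k Pw Pn + kint k Pw Pw"
      unfolding k1 k2 k3 k4 qf_def d_def
      by (simp add: sum_subtractf[symmetric] sum.distrib[symmetric] algebra_simps)
    then show ?thesis using k5 by (simp add: mmd2_kint)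
  qed
  define c where "c = (\<lambda>l. if l < n then 1 / real n - w l else 0)"
  define e' where "e' = (\<lambda>l. if l < n then 0 else - w l)"
  have "d = (\<lambda>l. c l + e' l)" by (auto simp: d_def c_def e'_def u_def)
  then have f1: "mmd k Pn Pw \<le> sqrt (qf N G c) + sqrt (qf N G e')"
    using qf_triangle[OF Gpsd, of c e'] e by (simp add: mmd_def)
  have g: "qf N G c = (\<Sum>i<n. \<Sum>j<n. (1 / real n - w i) * (1 / real n - w j) * k (xs i) (xs j))"
  proof -
    have "qf N G c = (\<Sum>a<N. if a < n then (\<Sum>b<N. if b < n then (1 / real n - w a) * (1 / real n - w b) * k (xs a) (xs b) else 0) else 0)"
      unfolding qf_def by (intro sum.cong refl) (auto simp: c_def G_def z_def atoms_def intro!: sum.cong)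
    also have "\<dots> = (\<Sum>a<n. (\<Sum>b<N. if b < n then (1 / real n - w a) * (1 / real n - w b) * k (xs a) (xs b) else 0))"
      by (rule sum_lt_if) (simp add: N_def)
    also have "\<dots> = (\<Sum>a<n. \<Sum>b<n. (1 / real n - w a) * (1 / real n - w b) * k (xs a) (xs b))"
      by (intro sum.cong refl sum_lt_if) (simp add: N_def)
    finally show ?thesis .
  qed
  have h: "sqrt (qf N G e') \<le> 1 - (\<Sum>i<n. w i)"
  proof -
    have se: "(\<Sum>a<N. \<bar>e' a\<bar>) = 1 - (\<Sum>i<n. w i)"
    proof -
      have ea: "(\<Sum>a<N. \<bar>e' a\<bar>) = (\<Sum>a<N. if a < n then 0 else w a)"
        using wN by (intro sum.cong refl) (auto simp: e'_def)
      have "(\<Sum>a<N. w a) = (\<Sum>a<N. (if a < n then w a else 0) + (if a < n then 0 else w a))"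
        by (intro sum.cong refl) auto
      also have "\<dots> = (\<Sum>a<N. if a < n then w a else 0) + (\<Sum>a<N. \<bar>e' a\<bar>)"
        unfolding ea by (rule sum.distrib)
      finally have "(\<Sum>a<N. w a) = (\<Sum>a<N. if a < n then w a else 0) + (\<Sum>a<N. \<bar>e' a\<bar>)" .
      also have "(\<Sum>a<N. if a < n then w a else 0) = (\<Sum>a<n. w a)" by (rule sum_lt_if) (simp add: N_def)
      finally show ?thesis using wN by simp
    qed
    have nn: "0 \<le> (\<Sum>a<N. \<bar>e' a\<bar>)" by (rule sum_nonneg) simp
    have "qf N G e' \<le> (\<Sum>a<N. \<Sum>b<N. \<bar>e' a\<bar> * \<bar>e' b\<bar>)"
      unfolding qf_def
    proof (intro sum_mono)
      fix a b assume a: "a \<in> {..<N}" and b: "b \<in> {..<N}"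
      have "\<bar>G a b\<bar> \<le> 1" unfolding G_def using z a b k_bdd by auto
      have "e' a * e' b * G a b \<le> \<bar>e' a * e' b * G a b\<bar>" by (rule abs_ge_self)
      also have "\<dots> = \<bar>e' a * e' b\<bar> * \<bar>G a b\<bar>" by (rule abs_mult)
      also have "\<dots> \<le> \<bar>e' a * e' b\<bar>" using \<open>\<bar>G a b\<bar> \<le> 1\<close> by (intro mult_left_le) auto
      finally show "e' a * e' b * G a b \<le> \<bar>e' a\<bar> * \<bar>e' b\<bar>" by (simp add: abs_mult)
    qed
    also have "\<dots> = (\<Sum>a<N. \<bar>e' a\<bar>)^2" by (simp add: power2_eq_square sum_product)
    finally have "sqrt (qf N G e') \<le> sqrt ((\<Sum>a<N. \<bar>e' a\<bar>)^2)" by (rule real_sqrt_le_mono)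
    also have "\<dots> = (\<Sum>a<N. \<bar>e' a\<bar>)" using nn by simp
    finally show ?thesis using se by simp
  qed
  have "mmd k P0 (Pt th) \<le> (INF \<theta>\<in>\<Theta>. mmd k P0 (Pt \<theta>)) + 2 * mmd k P0 Pw" using c1 by simp
  also have "\<dots> \<le> (INF \<theta>\<in>\<Theta>. mmd k P0 (Pt \<theta>)) + 2 * (mmd k P0 Pn + (sqrt (qf N G c) + (1 - (\<Sum>i<n. w i))))"
    using c2 f1 h by simp
  also have "\<dots> = (INF \<theta>\<in>\<Theta>. mmd k P0 (Pt \<theta>)) + 2 * mmd k P0 (wpm M n xs (\<lambda>_. 1 / real n))
       + 2 * sqrt (\<Sum>i<n. \<Sum>j<n. (1 / real n - w i) * (1 / real n - w j) * k (xs i) (xs j))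
       + 2 * (1 - (\<Sum>i<n. w i))"
    unfolding g Pn_eq by (simp add: distrib_left)
  finally show ?thesis
    unfolding th_def Pw_def z_def N_def .
qed

end

lemma (in prob_space) sqrt_jensen:
  fixes f :: "'a \<Rightarrow> real"
  assumes f: "integrable M f" and g: "integrable M (\<lambda>x. sqrt (f x))" and nn: "AE x in M. 0 \<le> f x"
  shows "(\<integral>x. sqrt (f x) \<partial>M) \<le> sqrt (\<integral>x. f x \<partial>M)"
proof -
  have sq: "AE x in M. (sqrt (f x))\<^sup>2 = f x" using nn by eventually_elim simp
  have fm[measurable]: "f \<in> borel_measurable M" using f by auto
  have g2: "integrable M (\<lambda>x. (sqrt (f x))\<^sup>2)"
    using f by (rule integrable_cong_AE_imp) (use sq in \<open>auto elim: AE_mp\<close>)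
  have "0 \<le> variance (\<lambda>x. sqrt (f x))" by (intro Bochner_Integration.integral_nonneg) simp
  also have "\<dots> = expectation (\<lambda>x. (sqrt (f x))\<^sup>2) - (expectation (\<lambda>x. sqrt (f x)))\<^sup>2"
    by (rule variance_eq[OF g g2])
  also have "expectation (\<lambda>x. (sqrt (f x))\<^sup>2) = expectation f"
    by (rule integral_cong_AE) (use sq in auto)
  finally have "(expectation (\<lambda>x. sqrt (f x)))\<^sup>2 \<le> expectation f" by simp
  then have "sqrt ((expectation (\<lambda>x. sqrt (f x)))\<^sup>2) \<le> sqrt (expectation f)" by (rule real_sqrt_le_mono)
  then show ?thesis by simp
qed


context kern begin

lemma comp_meas_PiM:
  assumes "sets P = sets M" "i \<in> I"
  shows "(\<lambda>\<omega>. \<omega> i) \<in> measurable (PiM I (\<lambda>_. P)) M"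
  using assms by (subst measurable_cong_sets[OF refl assms(1)[symmetric]]) (rule measurable_component_singleton)

lemma space_PiM_M:
  assumes "sets P = sets M" "\<omega> \<in> space (PiM I (\<lambda>_. P))" "i \<in> I"
  shows "\<omega> i \<in> space M"
  using assms sets_eq_imp_space_eq[OF assms(1)] by (auto simp: space_PiM PiE_iff)

lemma pair_exp_const:
  assumes P: "prob_space P" "sets P = sets M" and ij: "i \<in> I" "j \<in> I"
  shows "(\<integral>\<omega>. k (\<omega> i) (\<omega> j) \<partial>PiM I (\<lambda>_. P)) = (if i = j then (\<integral>x. k x x \<partial>P) else kint k P P)"
proof (cases "i = j")
  case True
  have "(\<lambda>x. k x x) \<in> borel_measurable P"
    by (intro k_meas_comp) (auto simp: measurable_ident_sets[OF P(2)])
  then have "(\<integral>\<omega>. k (\<omega> i) (\<omega> i) \<partial>PiM I (\<lambda>_. P)) = (\<integral>x. k x x \<partial>P)"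
    using P ij by (intro single_marginal_integral) auto
  then show ?thesis using True by simp
next
  case False
  have sp: "space P = space M" using P(2) by (rule sets_eq_imp_space_eq)
  have "(\<integral>\<omega>. k (\<omega> i) (\<omega> j) \<partial>PiM I (\<lambda>_. P)) = (\<integral>x. (\<integral>y. k x y \<partial>P) \<partial>P)"
    using P ij False k_meas_pair[OF P(2) P(2)] k_bdd sp
    by (intro pair_marginal_integral[where B=1]) auto
  then show ?thesis using False by (simp add: kint_def)
qed

lemma inner_exp:
  assumes P: "prob_space P" "sets P = sets M" and i: "i \<in> I"
  shows "(\<integral>\<omega>. (\<integral>y. k (\<omega> i) y \<partial>P) \<partial>PiM I (\<lambda>_. P)) = kint k P P"
proof -
  have "(\<lambda>x. \<integral>y. k x y \<partial>P) \<in> borel_measurable P"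
    using inner_meas[OF P] by (subst measurable_cong_sets[OF P(2) refl])
  then show ?thesis unfolding kint_def using P i by (intro single_marginal_integral) auto
qed

definition m2 :: "'a measure \<Rightarrow> nat \<Rightarrow> (nat \<Rightarrow> 'a) \<Rightarrow> real" where
  "m2 P n xs = kint k P P - 2 * (\<Sum>i<n. 1 / real n * (\<integral>y. k (xs i) y \<partial>P))
     + (\<Sum>i<n. \<Sum>j<n. 1 / real n * (1 / real n) * k (xs i) (xs j))"

lemma mmd2_Pn:
  assumes P: "prob_space P" "sets P = sets M" and n: "n \<ge> 1" and xs: "\<forall>i<n. xs i \<in> space M"
  shows "mmd2 k P (wpm M n xs (\<lambda>_. 1 / real n)) = m2 P n xs"
proof -
  have u: "\<forall>i<n. 0 \<le> 1 / real n" by simp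
  have su: "(\<Sum>i<n. 1 / real n) = 1" using n by simp
  have Pn: "prob_space (wpm M n xs (\<lambda>_. 1 / real n))" "sets (wpm M n xs (\<lambda>_. 1 / real n)) = sets M"
    using prob_wpm[OF xs u su] sets_wpm[OF xs] by auto
  show ?thesis
    unfolding mmd2_kint m2_def
    using kint_sym[OF P Pn] kint_wpm_left[OF xs u P] kint_wpm_wpm[OF xs u u] by simp
qed

lemma m2_meas:
  assumes P: "prob_space P" "sets P = sets M"
  shows "m2 P n \<in> borel_measurable (PiM {..<n} (\<lambda>_. P))"
proof -
  have c: "\<And>i. i < n \<Longrightarrow> (\<lambda>\<omega>. \<omega> i) \<in> measurable (PiM {..<n} (\<lambda>_. P)) M"
    by (intro comp_meas_PiM[OF P(2)]) auto
  have i: "\<And>i. i < n \<Longrightarrow> (\<lambda>\<omega>. \<integral>y. k (\<omega> i) y \<partial>P) \<in> borel_measurable (PiM {..<n} (\<lambda>_. P))"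
    using measurable_comp[OF c inner_meas[OF P]] by (simp add: comp_def)
  have kk: "\<And>i j. i < n \<Longrightarrow> j < n \<Longrightarrow> (\<lambda>\<omega>. k (\<omega> i) (\<omega> j)) \<in> borel_measurable (PiM {..<n} (\<lambda>_. P))"
    using c by (intro k_meas_comp) auto
  show ?thesis unfolding m2_def[abs_def]
    using i kk by (intro borel_measurable_add borel_measurable_diff borel_measurable_sum borel_measurable_times measurable_const) auto
qed

lemma m2_bdd:
  assumes P: "prob_space P" "sets P = sets M" and xs: "\<forall>i<n. xs i \<in> space M"
  shows "\<bar>m2 P n xs\<bar> \<le> 4"
proof -
  have a: "\<bar>kint k P P\<bar> \<le> 1" by (rule kint_bdd[OF P P])
  have b: "\<bar>\<Sum>i<n. 1 / real n * (\<integral>y. k (xs i) y \<partial>P)\<bar> \<le> 1"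
  proof -
    have "\<bar>\<Sum>i<n. 1 / real n * (\<integral>y. k (xs i) y \<partial>P)\<bar> \<le> (\<Sum>i<n. \<bar>1 / real n * (\<integral>y. k (xs i) y \<partial>P)\<bar>)"
      by (rule sum_abs)
    also have "\<dots> \<le> (\<Sum>i<n. 1 / real n)"
      using inner_bdd[OF P] xs by (intro sum_mono) (auto simp: abs_mult intro!: divide_right_mono)
    also have "\<dots> \<le> 1" by (cases "n = 0") auto
    finally show ?thesis .
  qed
  have c: "\<bar>\<Sum>i<n. \<Sum>j<n. 1 / real n * (1 / real n) * k (xs i) (xs j)\<bar> \<le> 1"
  proof -
    have "\<bar>\<Sum>i<n. \<Sum>j<n. 1 / real n * (1 / real n) * k (xs i) (xs j)\<bar> \<le> (\<Sum>i<n. \<bar>\<Sum>j<n. 1 / real n * (1 / real n) * k (xs i) (xs j)\<bar>)"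
      by (rule sum_abs)
    also have "\<dots> \<le> (\<Sum>i<n. \<Sum>j<n. \<bar>1 / real n * (1 / real n) * k (xs i) (xs j)\<bar>)"
      by (intro sum_mono sum_abs)
    also have "\<dots> \<le> (\<Sum>i<n. \<Sum>j<n. 1 / real n * (1 / real n))"
      using k_bdd xs by (intro sum_mono) (auto simp: abs_mult intro!: divide_right_mono)
    also have "\<dots> \<le> 1" by (cases "n = 0") auto
    finally show ?thesis .
  qed
  show ?thesis unfolding m2_def using a b c by linarith
qed

lemma exp_m2:
  assumes P: "prob_space P" "sets P = sets M" and n: "n \<ge> 1"
  shows "(\<integral>xs. m2 P n xs \<partial>PiM {..<n} (\<lambda>_. P)) = ((\<integral>x. k x x \<partial>P) - kint k P P) / real n"
proof -
  let ?X = "PiM {..<n} (\<lambda>_. P)"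
  interpret X: prob_space ?X using P by (intro prob_space_PiM) auto
  have c: "\<And>i. i < n \<Longrightarrow> (\<lambda>\<omega>. \<omega> i) \<in> measurable ?X M"
    by (intro comp_meas_PiM[OF P(2)]) auto
  have im: "\<And>i. i < n \<Longrightarrow> (\<lambda>\<omega>. \<integral>y. k (\<omega> i) y \<partial>P) \<in> borel_measurable ?X"
    using measurable_comp[OF c inner_meas[OF P]] by (simp add: comp_def)
  have ib: "AE \<omega> in ?X. norm (\<integral>y. k (\<omega> i) y \<partial>P) \<le> 1" if i: "i < n" for i
  proof (intro AE_I2)
    fix \<omega> assume om: "\<omega> \<in> space ?X"
    have "\<omega> i \<in> space M" using space_PiM_M[OF P(2) om, of i] i by simp
    then show "norm (\<integral>y. k (\<omega> i) y \<partial>P) \<le> 1" using inner_bdd[OF P] by simp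
  qed
  have iint: "\<And>i. i < n \<Longrightarrow> integrable ?X (\<lambda>\<omega>. 1 / real n * (\<integral>y. k (\<omega> i) y \<partial>P))"
    apply (intro integrable_mult_right X.integrable_const_bound[of _ 1])
    using ib im by auto
  have kint': "\<And>i j. i < n \<Longrightarrow> j < n \<Longrightarrow> integrable ?X (\<lambda>\<omega>. 1 / real n * (1 / real n) * k (\<omega> i) (\<omega> j))"
  proof -
    fix i j assume i: "i < n" and j: "j < n"
    have "AE \<omega> in ?X. norm (k (\<omega> i) (\<omega> j)) \<le> 1"
    proof (intro AE_I2)
      fix \<omega> assume om: "\<omega> \<in> space ?X"
      have "\<omega> i \<in> space M" "\<omega> j \<in> space M" using space_PiM_M[OF P(2) om] i j by auto
      then show "norm (k (\<omega> i) (\<omega> j)) \<le> 1" using k_bdd by simp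
    qed
    then show "integrable ?X (\<lambda>\<omega>. 1 / real n * (1 / real n) * k (\<omega> i) (\<omega> j))"
      using c i j by (intro integrable_mult_right X.integrable_const_bound[of _ 1]) (auto intro!: k_meas_comp)
  qed
  define D where "D = (\<integral>x. k x x \<partial>P)"
  define K where "K = kint k P P"
  have int1: "integrable ?X (\<lambda>xs. \<Sum>i<n. 1 / real n * (\<integral>y. k (xs i) y \<partial>P))"
    by (intro Bochner_Integration.integrable_sum iint) simp
  have int2: "integrable ?X (\<lambda>xs. \<Sum>i<n. \<Sum>j<n. 1 / real n * (1 / real n) * k (xs i) (xs j))"
    by (intro Bochner_Integration.integrable_sum kint') simp_all
  have E1: "(\<integral>xs. (\<Sum>i<n. 1 / real n * (\<integral>y. k (xs i) y \<partial>P)) \<partial>?X) = (\<Sum>i<n. 1 / real n * K)"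
    using iint inner_exp[OF P, where I="{..<n}"] by (subst Bochner_Integration.integral_sum) (auto simp: K_def)
  have E2: "(\<integral>xs. (\<Sum>i<n. \<Sum>j<n. 1 / real n * (1 / real n) * k (xs i) (xs j)) \<partial>?X)
      = (\<Sum>i<n. \<Sum>j<n. 1 / real n * (1 / real n) * (if i = j then D else K))"
    apply (subst Bochner_Integration.integral_sum)
     apply (intro Bochner_Integration.integrable_sum kint') apply simp_all[2]
    apply (intro sum.cong refl)
    apply (subst Bochner_Integration.integral_sum)
    using kint' apply simp
    apply (intro sum.cong refl)
    using pair_exp_const[OF P, where I="{..<n}"] by (simp add: K_def D_def)
  have "(\<integral>xs. m2 P n xs \<partial>?X) = K - 2 * (\<Sum>i<n. 1 / real n * K)
      + (\<Sum>i<n. \<Sum>j<n. 1 / real n * (1 / real n) * (if i = j then D else K))"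
    unfolding m2_def[abs_def] using int1 int2 E1 E2 X.prob_space
    by (simp add: K_def)
  also have "(\<Sum>i<n. \<Sum>j<n. 1 / real n * (1 / real n) * (if i = j then D else K))
      = (\<Sum>i<n. \<Sum>j<n. 1 / real n * (1 / real n) * K + (if i = j then 1 / real n * (1 / real n) * (D - K) else 0))"
    by (intro sum.cong refl) (auto simp: algebra_simps add_divide_distrib[symmetric])
  also have "\<dots> = (\<Sum>i<n. real n * (1 / real n * (1 / real n) * K) + 1 / real n * (1 / real n) * (D - K))"
    by (intro sum.cong refl) (simp add: sum.distrib)
  also have "\<dots> = K + (D - K) / real n"
    using n by (simp add: field_simps)
  finally show ?thesis using n by (simp add: D_def K_def field_simps)
qed

end

lemma bound_alg:
  fixes n \<alpha> :: real
  assumes n: "n \<ge> 1" and a: "\<alpha> > 0"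
  defines "A \<equiv> n + \<alpha>"
  defines "e1 \<equiv> 1 / n^2 - 2 / (n * A) + 1 / (A * (A + 1))"
  defines "e2 \<equiv> 1 / n^2 - 2 / (n * A) + 2 / (A * (A + 1))"
  shows "n * e2 + n * (n - 1) * \<bar>e1\<bar> \<le> (2 * (n - 1) + \<alpha> * (\<alpha> + 1)) / ((\<alpha> + n) * (n + \<alpha> + 1))"
proof -
  define s where "s = \<alpha> * \<alpha> + \<alpha>"
  define Z where "Z = n^2 * (A * (A + 1))"
  have A: "A > 0" using n a by (simp add: A_def)
  have Z: "Z > 0" using A n by (simp add: Z_def)
  have nz: "n \<noteq> 0" "A \<noteq> 0" "A + 1 \<noteq> 0" using n A by auto
  have al: "\<alpha> = A - n" by (simp add: A_def)
  have AA: "A * (A + 1) \<noteq> 0" using nz by simp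
  have t1: "1 / n^2 * Z = A * (A + 1)" unfolding Z_def using nz by (simp add: power2_eq_square)
  have t2: "2 / (n * A) * Z = 2 * n * (A + 1)" unfolding Z_def using nz by (simp add: power2_eq_square field_simps)
  have t3: "1 / (A * (A + 1)) * Z = n^2" unfolding Z_def using AA by simp
  have t4: "2 / (A * (A + 1)) * Z = 2 * n^2" unfolding Z_def using AA by simp
  have "e1 * Z = A * (A + 1) - 2 * n * (A + 1) + n^2"
    unfolding e1_def using t1 t2 t3 by (simp add: algebra_simps)
  also have "\<dots> = s - n" unfolding s_def al by (simp add: algebra_simps power2_eq_square)
  finally have E1: "e1 = (s - n) / Z" using Z by (simp add: field_simps)
  have "e2 * Z = A * (A + 1) - 2 * n * (A + 1) + 2 * n^2"
    unfolding e2_def using t1 t2 t4 by (simp add: algebra_simps)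
  also have "\<dots> = s - n + n^2" unfolding s_def al by (simp add: algebra_simps power2_eq_square)
  finally have E2: "e2 = (s - n + n^2) / Z" using Z by (simp add: field_simps)
  have den: "(\<alpha> + n) * (n + \<alpha> + 1) = A * (A + 1)" by (simp add: A_def algebra_simps)
  have num: "2 * (n - 1) + \<alpha> * (\<alpha> + 1) = 2 * (n - 1) + s" by (simp add: s_def algebra_simps)
  have B: "(2 * (n - 1) + \<alpha> * (\<alpha> + 1)) / ((\<alpha> + n) * (n + \<alpha> + 1)) = n^2 * (2 * (n - 1) + s) / Z"
    unfolding den num Z_def using nz by simp
  show ?thesis
  proof (cases "s - n \<ge> 0")
    case True
    have "n * e2 + n * (n - 1) * \<bar>e1\<bar> = (n * (s - n + n^2) + n * (n - 1) * (s - n)) / Z"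
      using True Z by (simp add: E1 E2 field_simps)
    also have "\<dots> = n^2 * s / Z" by (simp add: algebra_simps power2_eq_square)
    also have "\<dots> \<le> n^2 * (2 * (n - 1) + s) / Z" using Z n by (intro divide_right_mono mult_left_mono) auto
    finally show ?thesis using B by simp
  next
    case False
    have "n * e2 + n * (n - 1) * \<bar>e1\<bar> = (n * (s - n + n^2) - n * (n - 1) * (s - n)) / Z"
      using False Z by (simp add: E1 E2 field_simps)
    also have "n * (s - n + n^2) - n * (n - 1) * (s - n) = n^2 * (2 * (n - 1) + s) - 2 * n * (n - 1) * s"
      by (simp add: algebra_simps power2_eq_square)
    also have "(n^2 * (2 * (n - 1) + s) - 2 * n * (n - 1) * s) / Z = n^2 * (2 * (n - 1) + s) / Z - 2 * n * (n - 1) * s / Z"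
      by (rule diff_divide_distrib)
    also have "\<dots> \<le> n^2 * (2 * (n - 1) + s) / Z"
      using Z n a by (simp add: s_def)
    finally show ?thesis using B by simp
  qed
qed

lemma sum_split_add: "(\<Sum>l<n+(T::nat). f l) = (\<Sum>l<n. f l) + (\<Sum>l<T. (f (n + l) :: 'b::comm_monoid_add))"
  by (induction T) (auto simp: add.assoc)

locale dset =
  fixes n T :: nat and \<alpha> :: real
  assumes n_pos: "n \<ge> 1" and T_pos: "T \<ge> 1" and \<alpha>_pos: "\<alpha> > 0"
begin

abbreviation "Dir \<equiv> dirichlet (n + T) (dir_params n T \<alpha>)"
definition "AA = real n + \<alpha>"
definition "e1 = 1 / (real n)^2 - 2 / (real n * AA) + 1 / (AA * (AA + 1))"
definition "e2 = 1 / (real n)^2 - 2 / (real n * AA) + 2 / (AA * (AA + 1))"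

lemma AA_pos: "AA > 0" using \<alpha>_pos by (simp add: AA_def)

lemma apos: "0 < dir_params n T \<alpha> l"
  using \<alpha>_pos T_pos by (simp add: dir_params_def)

lemma Asum: "(\<Sum>l<n+T. dir_params n T \<alpha> l) = AA"
proof -
  have "(\<Sum>l<n+T. dir_params n T \<alpha> l) = (\<Sum>l<n. 1) + (\<Sum>l<T. \<alpha> / real T)"
    by (simp add: sum_split_add dir_params_def)
  also have "\<dots> = AA" using T_pos by (simp add: AA_def)
  finally show ?thesis .
qed

lemma prob_Dir: "prob_space Dir" by (rule prob_dirichlet) (rule apos)

lemma AE_Dir: "AE w in Dir. (\<forall>l<n+T. 0 \<le> w l) \<and> (\<Sum>l<n+T. w l) = 1"
  using n_pos by (intro AE_dirichlet apos) auto

lemma AE_Dir_le1: "AE w in Dir. \<forall>l<n+T. 0 \<le> w l \<and> w l \<le> 1"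
  using AE_Dir
proof eventually_elim
  case (elim w)
  have "\<And>l. l < n + T \<Longrightarrow> w l \<le> (\<Sum>l<n+T. w l)"
    using elim by (intro member_le_sum) auto
  then show ?case using elim by auto
qed

lemma comp_meas_Dir[measurable]: "i < n + T \<Longrightarrow> (\<lambda>w. w i) \<in> borel_measurable Dir"
  by (subst measurable_cong_sets[OF sets_dirichlet refl]) (rule measurable_component_singleton, simp)

lemma int_w: assumes "i < n + T" shows "integrable Dir (\<lambda>w. w i)"
proof -
  interpret prob_space Dir by (rule prob_Dir)
  have "AE w in Dir. norm (w i) \<le> 1"
    using AE_Dir_le1 by eventually_elim (use assms in auto)
  then show ?thesis using assms by (intro integrable_const_bound[of _ 1]) auto
qed

lemma int_ww: assumes "i < n + T" "j < n + T" shows "integrable Dir (\<lambda>w. w i * w j)"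
proof -
  interpret prob_space Dir by (rule prob_Dir)
  have "AE w in Dir. norm (w i * w j) \<le> 1"
    using AE_Dir_le1
  proof eventually_elim
    case (elim w)
    then have "0 \<le> w i" "w i \<le> 1" "0 \<le> w j" "w j \<le> 1" using assms by auto
    then show ?case by (simp add: abs_mult mult_le_one)
  qed
  then show ?thesis using assms by (intro integrable_const_bound[of _ 1]) auto
qed

lemma Ew: "i < n \<Longrightarrow> (\<integral>w. w i \<partial>Dir) = 1 / AA"
  using dir_mean[OF apos, of i "n + T"] Asum by (simp add: dir_params_def)

lemma Eww: assumes i: "i < n" and j: "j < n"
  shows "(\<integral>w. w i * w j \<partial>Dir) = (if i = j then 2 else 1) / (AA * (AA + 1))"
proof (cases "i = j")
  case True
  then show ?thesis using dir_sq[OF apos, of i "n + T"] Asum i by (simp add: dir_params_def)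
next
  case False
  then show ?thesis using dir_cross[OF apos, of i "n + T" j] Asum i j by (simp add: dir_params_def)
qed

lemma Epair: assumes i: "i < n" and j: "j < n"
  shows "(\<integral>w. (1 / real n - w i) * (1 / real n - w j) \<partial>Dir) = (if i = j then e2 else e1)"
proof -
  interpret prob_space Dir by (rule prob_Dir)
  have eq: "\<And>w. (1 / real n - w i) * (1 / real n - w j) = 1 / (real n)^2 - (1 / real n) * w i - (1 / real n) * w j + w i * w j"
    by (simp add: algebra_simps power2_eq_square)
  have ii: "integrable Dir (\<lambda>w. w i)" "integrable Dir (\<lambda>w. w j)" "integrable Dir (\<lambda>w. w i * w j)"
    using i j by (auto intro!: int_w int_ww)
  have "(\<integral>w. (1 / real n - w i) * (1 / real n - w j) \<partial>Dir)
      = 1 / (real n)^2 - (1 / real n) * (\<integral>w. w i \<partial>Dir) - (1 / real n) * (\<integral>w. w j \<partial>Dir) + (\<integral>w. w i * w j \<partial>Dir)"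
    unfolding eq using ii prob_space by simp
  also have "\<dots> = (if i = j then e2 else e1)"
    using Ew[OF i] Ew[OF j] Eww[OF i j] by (simp add: e1_def e2_def)
  finally show ?thesis .
qed

lemma e2_nonneg: "0 \<le> e2"
proof -
  interpret prob_space Dir by (rule prob_Dir)
  have "0 \<le> (\<integral>w. (1 / real n - w 0) * (1 / real n - w 0) \<partial>Dir)"
    by (intro Bochner_Integration.integral_nonneg) simp
  then show ?thesis using Epair[of 0 0] n_pos by simp
qed

lemma E_tail: "(\<integral>w. 1 - (\<Sum>i<n. w i) \<partial>Dir) = \<alpha> / AA"
proof -
  interpret prob_space Dir by (rule prob_Dir)
  have "(\<integral>w. 1 - (\<Sum>i<n. w i) \<partial>Dir) = 1 - (\<Sum>i<n. (\<integral>w. w i \<partial>Dir))"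
    using int_w prob_space by (subst Bochner_Integration.integral_diff) (auto intro!: Bochner_Integration.integrable_sum simp: Bochner_Integration.integral_sum)
  also have "\<dots> = 1 - real n / AA" using Ew by simp
  also have "\<dots> = \<alpha> / AA" using AA_pos by (simp add: AA_def field_simps)
  finally show ?thesis .
qed

end


definition Qf :: "('a \<Rightarrow> 'a \<Rightarrow> real) \<Rightarrow> nat \<Rightarrow> (nat \<Rightarrow> 'a) \<Rightarrow> (nat \<Rightarrow> real) \<Rightarrow> real" where
  "Qf k n xs w = (\<Sum>i<n. \<Sum>j<n. (1 / real n - w i) * (1 / real n - w j) * k (xs i) (xs j))"

lemma sum_if_eq: "i < (n::nat) \<Longrightarrow> (\<Sum>j<n. if i = j then x else y) = x + (real n - 1) * (y::real)"
proof -
  assume i: "i < n"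
  have "(\<Sum>j<n. if i = j then x else y) = (\<Sum>j<n. y + (if i = j then x - y else 0))"
    by (intro sum.cong) auto
  also have "\<dots> = real n * y + (x - y)" using i by (simp add: sum.distrib)
  finally show ?thesis by (simp add: algebra_simps)
qed

lemma tail_bound:
  fixes n \<alpha> :: real assumes n: "n \<ge> 1" and a: "\<alpha> > 0"
  shows "\<alpha> / (n + \<alpha>) \<le> sqrt (\<alpha> * (1 + \<alpha>) / ((\<alpha> + n) * (\<alpha> + n + 1)))"
proof (rule real_le_rsqrt)
  have A: "n + \<alpha> > 0" using n a by simp
  have "(\<alpha> / (n + \<alpha>))^2 = \<alpha> * \<alpha> / ((n + \<alpha>) * (n + \<alpha>))" by (simp add: power2_eq_square)
  also have "\<dots> \<le> \<alpha> * (1 + \<alpha>) / ((\<alpha> + n) * (\<alpha> + n + 1))"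
  proof -
    have "\<alpha> * \<alpha> * ((\<alpha> + n) * (\<alpha> + n + 1)) \<le> \<alpha> * (1 + \<alpha>) * ((n + \<alpha>) * (n + \<alpha>))"
    proof -
      have "\<alpha> * (\<alpha> + n + 1) \<le> (1 + \<alpha>) * (n + \<alpha>)" using n by (simp add: algebra_simps)
      then have "\<alpha> * (\<alpha> * (\<alpha> + n + 1)) * (\<alpha> + n) \<le> \<alpha> * ((1 + \<alpha>) * (n + \<alpha>)) * (\<alpha> + n)"
        using a A by (intro mult_right_mono mult_left_mono) auto
      then show ?thesis by (simp add: algebra_simps)
    qed
    then show ?thesis using A a by (simp add: divide_simps)
  qed
  finally show "(\<alpha> / (n + \<alpha>))^2 \<le> \<alpha> * (1 + \<alpha>) / ((\<alpha> + n) * (\<alpha> + n + 1))" .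
qed

locale ks = kern + dset
begin

lemma Qf_nonneg: "\<forall>i<n. xs i \<in> space M \<Longrightarrow> 0 \<le> Qf k n xs w"
  unfolding Qf_def by (rule k_psd_pts) auto

lemma int_pair: assumes i: "i < n" and j: "j < n"
  shows "integrable Dir (\<lambda>w. (1 / real n - w i) * (1 / real n - w j))"
proof -
  interpret prob_space Dir by (rule prob_Dir)
  have "AE w in Dir. norm ((1 / real n - w i) * (1 / real n - w j)) \<le> 1"
    using AE_Dir_le1
  proof eventually_elim
    case (elim w)
    have "0 \<le> w i" "w i \<le> 1" "0 \<le> w j" "w j \<le> 1" using elim i j by auto
    moreover have "0 \<le> 1 / real n" "1 / real n \<le> 1" using n_pos by auto
    ultimately have "\<bar>1 / real n - w i\<bar> \<le> 1" "\<bar>1 / real n - w j\<bar> \<le> 1"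
      unfolding abs_le_iff by linarith+
    then show ?case by (simp add: abs_mult mult_le_one)
  qed
  then show ?thesis using i j by (intro integrable_const_bound[of _ 1]) auto
qed

lemma Qf_meas: "Qf k n xs \<in> borel_measurable Dir"
  unfolding Qf_def[abs_def] by measurable

lemma int_Qf: "integrable Dir (Qf k n xs)"
  unfolding Qf_def[abs_def]
  by (intro Bochner_Integration.integrable_sum integrable_mult_left int_pair) auto

lemma EQ_bound:
  assumes xs: "\<forall>i<n. xs i \<in> space M"
  shows "(\<integral>w. Qf k n xs w \<partial>Dir) \<le> (2 * (real n - 1) + \<alpha> * (\<alpha> + 1)) / ((\<alpha> + real n) * (real n + \<alpha> + 1))"
proof -
  have "(\<integral>w. Qf k n xs w \<partial>Dir) = (\<Sum>i<n. \<Sum>j<n. (if i = j then e2 else e1) * k (xs i) (xs j))"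
    unfolding Qf_def
    apply (subst Bochner_Integration.integral_sum)
     apply (intro Bochner_Integration.integrable_sum integrable_mult_left int_pair) apply simp_all[2]
    apply (intro sum.cong refl)
    apply (subst Bochner_Integration.integral_sum)
     apply (intro integrable_mult_left int_pair) apply simp_all[2]
    apply (intro sum.cong refl)
    using Epair by simp
  also have "\<dots> \<le> (\<Sum>i<n. \<Sum>j<n. \<bar>if i = j then e2 else e1\<bar>)"
  proof (intro sum_mono)
    fix i j assume i: "i \<in> {..<n}" and j: "j \<in> {..<n}"
    have "\<bar>k (xs i) (xs j)\<bar> \<le> 1" using k_bdd xs i j by auto
    have "(if i = j then e2 else e1) * k (xs i) (xs j) \<le> \<bar>(if i = j then e2 else e1) * k (xs i) (xs j)\<bar>"
      by (rule abs_ge_self)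
    also have "\<dots> = \<bar>if i = j then e2 else e1\<bar> * \<bar>k (xs i) (xs j)\<bar>" by (rule abs_mult)
    also have "\<dots> \<le> \<bar>if i = j then e2 else e1\<bar>" using \<open>\<bar>k (xs i) (xs j)\<bar> \<le> 1\<close> by (intro mult_left_le) auto
    finally show "(if i = j then e2 else e1) * k (xs i) (xs j) \<le> \<bar>if i = j then e2 else e1\<bar>" .
  qed
  also have "\<dots> = (\<Sum>i<n. \<Sum>j<n. if i = j then e2 else \<bar>e1\<bar>)"
    using e2_nonneg by (intro sum.cong refl) auto
  also have "\<dots> = (\<Sum>i<n. e2 + (real n - 1) * \<bar>e1\<bar>)"
    by (intro sum.cong refl sum_if_eq) auto
  also have "\<dots> = real n * e2 + real n * (real n - 1) * \<bar>e1\<bar>" by (simp add: algebra_simps)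
  also have "\<dots> \<le> (2 * (real n - 1) + \<alpha> * (\<alpha> + 1)) / ((\<alpha> + real n) * (real n + \<alpha> + 1))"
    unfolding e1_def e2_def AA_def by (rule bound_alg) (use n_pos \<alpha>_pos in auto)
  finally show ?thesis .
qed

lemma int_sqrtQ:
  assumes xs: "\<forall>i<n. xs i \<in> space M"
  shows "integrable Dir (\<lambda>w. sqrt (Qf k n xs w))"
proof -
  interpret prob_space Dir by (rule prob_Dir)
  have "AE w in Dir. norm (sqrt (Qf k n xs w)) \<le> sqrt (real n * real n)"
  proof (rule AE_mp[OF AE_Dir_le1], intro AE_I2 impI)
    fix w :: "nat \<Rightarrow> real" assume w: "\<forall>l<n + T. 0 \<le> w l \<and> w l \<le> 1"
    have "Qf k n xs w \<le> (\<Sum>i<n. \<Sum>j<n. (1::real))"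
      unfolding Qf_def
    proof (intro sum_mono)
      fix i j assume i: "i \<in> {..<n}" and j: "j \<in> {..<n}"
      have "0 \<le> w i" "w i \<le> 1" "0 \<le> w j" "w j \<le> 1" using w i j by auto
      moreover have "0 \<le> 1 / real n" "1 / real n \<le> 1" using n_pos by auto
      ultimately have "\<bar>1 / real n - w i\<bar> \<le> 1" "\<bar>1 / real n - w j\<bar> \<le> 1"
        unfolding abs_le_iff by linarith+
      moreover have "\<bar>k (xs i) (xs j)\<bar> \<le> 1" using k_bdd xs i j by auto
      ultimately have "\<bar>(1 / real n - w i) * (1 / real n - w j) * k (xs i) (xs j)\<bar> \<le> 1"
        by (simp add: abs_mult mult_le_one)
      then show "(1 / real n - w i) * (1 / real n - w j) * k (xs i) (xs j) \<le> 1" by simp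
    qed
    then have "sqrt (Qf k n xs w) \<le> sqrt (real n * real n)" by (intro real_sqrt_le_mono) simp
    then show "norm (sqrt (Qf k n xs w)) \<le> sqrt (real n * real n)"
      using Qf_nonneg[OF xs, of w] by (simp only: real_norm_def abs_of_nonneg real_sqrt_ge_zero)
  qed
  then show ?thesis
    using Qf_meas by (intro integrable_const_bound) auto
qed

lemma Esqrt:
  assumes xs: "\<forall>i<n. xs i \<in> space M"
  shows "(\<integral>w. sqrt (Qf k n xs w) \<partial>Dir) \<le> sqrt ((2 * (real n - 1) + \<alpha> * (\<alpha> + 1)) / ((\<alpha> + real n) * (real n + \<alpha> + 1)))"
proof -
  interpret prob_space Dir by (rule prob_Dir)
  have "(\<integral>w. sqrt (Qf k n xs w) \<partial>Dir) \<le> sqrt (\<integral>w. Qf k n xs w \<partial>Dir)"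
    by (rule sqrt_jensen[OF int_Qf int_sqrtQ[OF xs]]) (use Qf_nonneg[OF xs] in auto)
  also have "\<dots> \<le> sqrt ((2 * (real n - 1) + \<alpha> * (\<alpha> + 1)) / ((\<alpha> + real n) * (real n + \<alpha> + 1)))"
    by (rule real_sqrt_le_mono[OF EQ_bound[OF xs]])
  finally show ?thesis .
qed

end

context kern begin

lemma mmd_bounds:
  assumes "prob_space P" "sets P = sets M" "prob_space Q" "sets Q = sets M"
  shows "0 \<le> mmd k P Q" "mmd k P Q \<le> 2"
proof -
  have "0 \<le> mmd2 k P Q" by (rule mmd2_nonneg[OF assms])
  then show "0 \<le> mmd k P Q" by (simp add: mmd_def)
  have "mmd2 k P Q \<le> 2^2"
    using kint_bdd[OF assms(1,2,1,2)] kint_bdd[OF assms] kint_bdd[OF assms(3,4,3,4)]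
    unfolding mmd2_kint abs_le_iff by simp
  then have "mmd k P Q \<le> sqrt (2^2)" unfolding mmd_def by (rule real_sqrt_le_mono)
  then show "mmd k P Q \<le> 2" by simp
qed

end

theorem theorem1:
  fixes M :: "'a measure"
    and k :: "'a \<Rightarrow> 'a \<Rightarrow> real"
    and \<Theta> :: "'t set"
    and Pt :: "'t \<Rightarrow> 'a measure"
    and thstar :: "'a measure \<Rightarrow> 't"
    and P0 F :: "'a measure"
    and n T :: nat
    and \<alpha> :: real
  assumes k_meas: "(\<lambda>(x, y). k x y) \<in> borel_measurable (M \<Otimes>\<^sub>M M)"
    and k_pd: "pd_kernel (space M) k"
    and k_bdd: "\<And>x y. x \<in> space M \<Longrightarrow> y \<in> space M \<Longrightarrow> \<bar>k x y\<bar> \<le> 1"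
    and Pt_prob: "\<And>\<theta>. \<theta> \<in> \<Theta> \<Longrightarrow> prob_space (Pt \<theta>) \<and> sets (Pt \<theta>) = sets M"
    and thstar_min: "\<And>P. prob_space P \<Longrightarrow> sets P = sets M \<Longrightarrow>
           thstar P \<in> \<Theta> \<and> (\<forall>\<theta>\<in>\<Theta>. mmd2 k P (Pt (thstar P)) \<le> mmd2 k P (Pt \<theta>))"
    and thstar_meas: "(\<lambda>(xs, (w, xt)). mmd k P0 (Pt (thstar (wpm M (n + T) (atoms n xs xt) w))))
           \<in> borel_measurable (PiM {..<n} (\<lambda>_. M) \<Otimes>\<^sub>M post_law n T \<alpha> F)"
    and P0_prob: "prob_space P0" and P0_sets: "sets P0 = sets M"
    and F_prob: "prob_space F" and F_sets: "sets F = sets M"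
    and n_pos: "n \<ge> 1" and T_pos: "T \<ge> 1" and \<alpha>_pos: "\<alpha> > 0"
  shows "(\<integral>xs. (\<integral>(w, xt). mmd k P0 (Pt (thstar (wpm M (n + T) (atoms n xs xt) w)))
              \<partial>(post_law n T \<alpha> F)) \<partial>(PiM {..<n} (\<lambda>_. P0)))
         \<le> (INF \<theta>\<in>\<Theta>. mmd k P0 (Pt \<theta>)) + 2 / sqrt (real n)
           + 2 * sqrt ((2 * (real n - 1) + \<alpha> * (\<alpha> + 1)) / ((\<alpha> + real n) * (real n + \<alpha> + 1)))
           + 2 * sqrt (\<alpha> * (1 + \<alpha>) / ((\<alpha> + real n) * (\<alpha> + real n + 1)))"
proof -
  interpret ks M k n T \<alpha>
    by unfold_locales (use k_meas k_pd k_bdd n_pos T_pos \<alpha>_pos in auto)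
  let ?X = "PiM {..<n} (\<lambda>_. P0)"
  let ?FT = "PiM {..<T} (\<lambda>_. F)"
  let ?PL = "post_law n T \<alpha> F"
  have PL: "?PL = Dir \<Otimes>\<^sub>M ?FT" by (simp add: post_law_def)
  interpret FT: prob_space ?FT using F_prob by (intro prob_space_PiM) auto
  interpret DirP: prob_space Dir by (rule prob_Dir)
  interpret X: prob_space ?X using P0_prob by (intro prob_space_PiM) auto
  have distr_fst: "distr ?PL Dir fst = Dir" unfolding PL by (rule FT.distr_pair_fst)
  have fst_meas: "fst \<in> measurable ?PL Dir" unfolding PL by (rule measurable_fst)
  have spF: "space F = space M" using F_sets by (rule sets_eq_imp_space_eq)

  define I0 where "I0 = (INF \<theta>\<in>\<Theta>. mmd k P0 (Pt \<theta>))"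
  have \<Theta>ne: "\<Theta> \<noteq> {}" using thstar_min[OF P0_prob P0_sets] by auto
  have I0nn: "0 \<le> I0" unfolding I0_def
  proof (rule cINF_greatest[OF \<Theta>ne])
    fix \<theta> assume "\<theta> \<in> \<Theta>"
    then show "0 \<le> mmd k P0 (Pt \<theta>)" using Pt_prob mmd_bounds(1)[OF P0_prob P0_sets] by auto
  qed
  define b2 where "b2 = (2 * (real n - 1) + \<alpha> * (\<alpha> + 1)) / ((\<alpha> + real n) * (real n + \<alpha> + 1))"
  define g1 where "g1 = (\<lambda>xs. mmd k P0 (wpm M n xs (\<lambda>_. 1 / real n)))"
  define h where "h = (\<lambda>xs w. I0 + 2 * g1 xs + 2 * sqrt (Qf k n xs w) + 2 * (1 - (\<Sum>i<n. w i)))"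

  have spX: "\<forall>i<n. xs i \<in> space M" if xs: "xs \<in> space ?X" for xs
  proof (intro allI impI)
    fix i assume "i < n"
    then show "xs i \<in> space M" using space_PiM_M[OF P0_sets xs, of i] by simp
  qed
  have Pn: "prob_space (wpm M n xs (\<lambda>_. 1 / real n)) \<and> sets (wpm M n xs (\<lambda>_. 1 / real n)) = sets M"
    if xs: "\<forall>i<n. xs i \<in> space M" for xs
  proof -
    have u: "\<forall>i<n. 0 \<le> 1 / real n" by simp
    have su: "(\<Sum>i<n. 1 / real n) = 1" using n_pos by simp
    show ?thesis using prob_wpm[OF xs u su] sets_wpm[OF xs] by auto
  qed
  have g1b: "0 \<le> g1 xs \<and> g1 xs \<le> 2" if xs: "\<forall>i<n. xs i \<in> space M" for xs
    using mmd_bounds[OF P0_prob P0_sets] Pn[OF xs] by (auto simp: g1_def)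

  have AEfst: "AE p in ?PL. (\<forall>l<n+T. 0 \<le> fst p l) \<and> (\<Sum>l<n+T. fst p l) = 1"
  proof -
    have "AE w in distr ?PL Dir fst. (\<forall>l<n+T. 0 \<le> w l) \<and> (\<Sum>l<n+T. w l) = 1"
      unfolding distr_fst by (rule AE_Dir)
    then show ?thesis by (rule AE_distrD[OF fst_meas])
  qed
  have spPL: "\<forall>j<T. snd p j \<in> space M" if p: "p \<in> space ?PL" for p
  proof -
    have "snd p \<in> space ?FT" using p unfolding PL by (auto simp: space_pair_measure)
    then show ?thesis using spF by (auto simp: space_PiM PiE_iff)
  qed

  have step1: "(\<integral>(w, xt). mmd k P0 (Pt (thstar (wpm M (n + T) (atoms n xs xt) w))) \<partial>?PL)
      \<le> I0 + 2 * g1 xs + 2 * sqrt b2 + 2 * (\<alpha> / AA)" if xs: "xs \<in> space ?X" for xs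
  proof -
    have xsM: "\<forall>i<n. xs i \<in> space M" by (rule spX[OF xs])
    have [measurable]: "Qf k n xs \<in> borel_measurable Dir" by (rule Qf_meas)
    have sm: "(\<lambda>w. \<Sum>i<n. w i) \<in> borel_measurable Dir"
      by (intro borel_measurable_sum) (auto intro!: comp_meas_Dir)
    have hm: "h xs \<in> borel_measurable Dir"
      unfolding h_def using sm by measurable
    have isum: "integrable Dir (\<lambda>w. \<Sum>i<n. w i)"
      by (intro Bochner_Integration.integrable_sum int_w) auto
    have hint: "integrable Dir (h xs)"
      unfolding h_def using int_sqrtQ[OF xsM] isum
      by (intro Bochner_Integration.integrable_add Bochner_Integration.integrable_diff integrable_mult_right) auto
    have Eh: "(\<integral>w. h xs w \<partial>Dir) = I0 + 2 * g1 xs + 2 * (\<integral>w. sqrt (Qf k n xs w) \<partial>Dir) + 2 * (\<alpha> / AA)"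
    proof -
      have "(\<integral>w. h xs w \<partial>Dir) = I0 + 2 * g1 xs + 2 * (\<integral>w. sqrt (Qf k n xs w) \<partial>Dir) + 2 * (\<integral>w. 1 - (\<Sum>i<n. w i) \<partial>Dir)"
        unfolding h_def using int_sqrtQ[OF xsM] isum DirP.prob_space
        by (simp add: Bochner_Integration.integral_add Bochner_Integration.integral_diff)
      then show ?thesis using E_tail by simp
    qed
    have "(\<integral>(w, xt). mmd k P0 (Pt (thstar (wpm M (n + T) (atoms n xs xt) w))) \<partial>?PL) \<le> (\<integral>p. h xs (fst p) \<partial>?PL)"
    proof (rule integral_mono_AE')
      show "integrable ?PL (\<lambda>p. h xs (fst p))"
        using integrable_distr_eq[OF fst_meas hm] hint distr_fst by simp
      show "AE p in ?PL. (case p of (w, xt) \<Rightarrow> mmd k P0 (Pt (thstar (wpm M (n + T) (atoms n xs xt) w)))) \<le> h xs (fst p)"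
        using AEfst
      proof (rule AE_mp, intro AE_I2 impI)
        fix p assume p: "p \<in> space ?PL" and v: "(\<forall>l<n+T. 0 \<le> fst p l) \<and> (\<Sum>l<n+T. fst p l) = 1"
        obtain w xt where pw: "p = (w, xt)" by (cases p)
        have xt: "\<forall>j<T. xt j \<in> space M" using spPL[OF p] pw by simp
        have "mmd k P0 (Pt (thstar (wpm M (n + T) (atoms n xs xt) w)))
            \<le> (INF \<theta>\<in>\<Theta>. mmd k P0 (Pt \<theta>)) + 2 * mmd k P0 (wpm M n xs (\<lambda>_. 1 / real n))
              + 2 * sqrt (\<Sum>i<n. \<Sum>j<n. (1 / real n - w i) * (1 / real n - w j) * k (xs i) (xs j))
              + 2 * (1 - (\<Sum>i<n. w i))"
          by (rule pointwise[OF Pt_prob thstar_min P0_prob P0_sets n_pos xsM xt]) (use v pw in auto)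
        then show "(case p of (w, xt) \<Rightarrow> mmd k P0 (Pt (thstar (wpm M (n + T) (atoms n xs xt) w)))) \<le> h xs (fst p)"
          using pw by (simp add: h_def I0_def g1_def Qf_def)
      qed
      show "AE p in ?PL. 0 \<le> h xs (fst p)"
        using AEfst
      proof (rule AE_mp, intro AE_I2 impI)
        fix p :: "(nat \<Rightarrow> real) \<times> (nat \<Rightarrow> 'a)" assume v: "(\<forall>l<n+T. 0 \<le> fst p l) \<and> (\<Sum>l<n+T. fst p l) = 1"
        have "(\<Sum>i<n. fst p i) \<le> (\<Sum>l<n+T. fst p l)"
        proof -
          have "0 \<le> (\<Sum>l<T. fst p (n + l))" using v by (intro sum_nonneg) auto
          then show ?thesis by (simp add: sum_split_add)
        qed
        then have "0 \<le> 1 - (\<Sum>i<n. fst p i)" using v by simp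
        moreover have "0 \<le> sqrt (Qf k n xs (fst p))" using Qf_nonneg[OF xsM] by simp
        ultimately show "0 \<le> h xs (fst p)" using I0nn g1b[OF xsM] by (simp add: h_def)
      qed
    qed
    also have "\<dots> = (\<integral>w. h xs w \<partial>Dir)"
      using integral_distr[OF fst_meas hm] distr_fst by simp
    also have "\<dots> \<le> I0 + 2 * g1 xs + 2 * sqrt b2 + 2 * (\<alpha> / AA)"
      unfolding Eh using Esqrt[OF xsM] by (simp add: b2_def)
    finally show ?thesis .
  qed

  have g1_eq: "g1 xs = sqrt (m2 P0 n xs)" if xs: "xs \<in> space ?X" for xs
    unfolding g1_def mmd_def using mmd2_Pn[OF P0_prob P0_sets n_pos spX[OF xs]] by simp
  have m2m: "m2 P0 n \<in> borel_measurable ?X" by (rule m2_meas[OF P0_prob P0_sets])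
  have g1m: "g1 \<in> borel_measurable ?X"
    using m2m by (subst measurable_cong[OF g1_eq]) auto
  have g1int: "integrable ?X g1"
    using g1m g1b spX by (intro X.integrable_const_bound[of _ 2]) (auto intro!: AE_I2)
  have m2int: "integrable ?X (m2 P0 n)"
    using m2m m2_bdd[OF P0_prob P0_sets] spX by (intro X.integrable_const_bound[of _ 4]) (auto intro!: AE_I2)
  have sm2int: "integrable ?X (\<lambda>xs. sqrt (m2 P0 n xs))"
    using g1int by (rule Bochner_Integration.integrable_cong[THEN iffD1, rotated 2]) (auto simp: g1_eq)
  have m2nn: "AE xs in ?X. 0 \<le> m2 P0 n xs"
  proof (intro AE_I2)
    fix xs assume xs: "xs \<in> space ?X"
    show "0 \<le> m2 P0 n xs"
      using mmd2_nonneg[OF P0_prob P0_sets, of "wpm M n xs (\<lambda>_. 1 / real n)"] Pn[OF spX[OF xs]]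
        mmd2_Pn[OF P0_prob P0_sets n_pos spX[OF xs]] by simp
  qed
  have Eg1: "(\<integral>xs. g1 xs \<partial>?X) \<le> 1 / sqrt (real n)"
  proof -
    have "(\<integral>xs. g1 xs \<partial>?X) = (\<integral>xs. sqrt (m2 P0 n xs) \<partial>?X)"
      by (intro Bochner_Integration.integral_cong refl) (simp add: g1_eq)
    also have "\<dots> \<le> sqrt (\<integral>xs. m2 P0 n xs \<partial>?X)"
      by (rule X.sqrt_jensen[OF m2int sm2int m2nn])
    finally have A: "(\<integral>xs. g1 xs \<partial>?X) \<le> sqrt (\<integral>xs. m2 P0 n xs \<partial>?X)" .
    have "(\<integral>xs. m2 P0 n xs \<partial>?X) = ((\<integral>x. k x x \<partial>P0) - kint k P0 P0) / real n"
      by (rule exp_m2[OF P0_prob P0_sets n_pos])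
    also have "\<dots> \<le> 1 / real n"
    proof -
      interpret P0: prob_space P0 by (rule P0_prob)
      have spP0: "space P0 = space M" using P0_sets by (rule sets_eq_imp_space_eq)
      have km: "(\<lambda>x. k x x) \<in> borel_measurable P0"
        by (intro k_meas_comp) (auto simp: measurable_ident_sets[OF P0_sets])
      have "(\<integral>x. k x x \<partial>P0) \<le> (\<integral>x. 1 \<partial>P0)"
      proof (rule integral_mono_AE')
        show "integrable P0 (\<lambda>x. 1)" by simp
        show "AE x in P0. k x x \<le> 1" using k_bdd spP0 by (intro AE_I2) (auto simp: abs_le_iff)
      qed simp
      then have D: "(\<integral>x. k x x \<partial>P0) \<le> 1" by (simp add: P0.prob_space)
      have K: "0 \<le> kint k P0 P0"
        using kint_psd[where P="\<lambda>_. P0" and c="\<lambda>_. 1" and m=1] P0_prob P0_sets by simp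
      show ?thesis using D K n_pos by (intro divide_right_mono) auto
    qed
    finally have "sqrt (\<integral>xs. m2 P0 n xs \<partial>?X) \<le> sqrt (1 / real n)" by (rule real_sqrt_le_mono)
    then have "(\<integral>xs. g1 xs \<partial>?X) \<le> sqrt (1 / real n)" using A by linarith
    then show ?thesis by (simp add: real_sqrt_divide)
  qed

  have "(\<integral>xs. (\<integral>(w, xt). mmd k P0 (Pt (thstar (wpm M (n + T) (atoms n xs xt) w))) \<partial>?PL) \<partial>?X)
      \<le> (\<integral>xs. I0 + 2 * g1 xs + 2 * sqrt b2 + 2 * (\<alpha> / AA) \<partial>?X)"
  proof (rule integral_mono_AE')
    show "integrable ?X (\<lambda>xs. I0 + 2 * g1 xs + 2 * sqrt b2 + 2 * (\<alpha> / AA))"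
      using g1int by auto
    show "AE xs in ?X. (\<integral>(w, xt). mmd k P0 (Pt (thstar (wpm M (n + T) (atoms n xs xt) w))) \<partial>?PL)
        \<le> I0 + 2 * g1 xs + 2 * sqrt b2 + 2 * (\<alpha> / AA)"
      using step1 by (intro AE_I2) auto
    show "AE xs in ?X. 0 \<le> I0 + 2 * g1 xs + 2 * sqrt b2 + 2 * (\<alpha> / AA)"
    proof (intro AE_I2)
      fix xs assume xs: "xs \<in> space ?X"
      have "0 \<le> \<alpha> / AA" using \<alpha>_pos AA_pos by simp
      moreover have "0 \<le> sqrt b2"
        unfolding b2_def using n_pos \<alpha>_pos by (intro real_sqrt_ge_zero divide_nonneg_pos) auto
      ultimately show "0 \<le> I0 + 2 * g1 xs + 2 * sqrt b2 + 2 * (\<alpha> / AA)"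
        using I0nn g1b[OF spX[OF xs]] by simp
    qed
  qed
  also have "\<dots> = I0 + 2 * (\<integral>xs. g1 xs \<partial>?X) + 2 * sqrt b2 + 2 * (\<alpha> / AA)"
    using g1int X.prob_space by simp
  also have "\<dots> \<le> I0 + 2 / sqrt (real n) + 2 * sqrt b2
        + 2 * sqrt (\<alpha> * (1 + \<alpha>) / ((\<alpha> + real n) * (\<alpha> + real n + 1)))"
  proof -
    have "\<alpha> / AA \<le> sqrt (\<alpha> * (1 + \<alpha>) / ((\<alpha> + real n) * (\<alpha> + real n + 1)))"
      unfolding AA_def by (rule tail_bound) (use n_pos \<alpha>_pos in auto)
    then show ?thesis using Eg1 by simp
  qed
  finally show ?thesis by (simp add: I0_def b2_def)
qed

end
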